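(* Let $N\ge 1$ be an odd integer and let $q_0,p_0$ be odd, relatively prime positive integers with either $p_0>q_0>0$ or $p_0=q_0=1$; put $q=p_0/q_0$. For integers $a,b$ and $N$ define $H(N,a,b)=\{(R(a\theta),R(b\theta+2\pi i/N)):\theta\in\mathbb{R},\ i\in\{0,\dots,N-1\}\}\subset \mathrm{SO}(2)\times\mathrm{SO}(2)$. Then each of the four groups below has nonzero fixed vectors in $L^2(\mathcal P,\lambda,\mathbb{R})$ under the action $T'$; more precisely, in angular coordinates $(\rho,\sigma)$, the space of $\phi\in L^2(\mathcal P,\lambda,\mathbb{R})$ fixed by the group is, almost everywhere, exactly the set of functions of the stated form, where $\vartheta$ ranges over real functions on $\mathbb{R}$ satisfying $\vartheta(u+\frac{2\pi}{q_0N'})=-\vartheta(u)$ for all $u$ and square-integrable on $[0,\frac{2\pi}{q_0N'}]$; consequently this space is isomorphic, as a Hilbert space, to $L^2([0,\frac{2\pi}{q_0N'}],du,\mathbb{R})$ (square-integrable functions with respect to Lebesgue measure on the arc $v_i=0$, $0\le u_i\le \frac{2\pi}{q_0N'}$): (1) for $H(N,q_0,p_0)$: $\phi(\rho,\sigma)=\varsigma(-\rho/2)\varsigma(\sigma/2)\vartheta(\sigma-q\rho)$, with $N'=N/\gcd(N,q_0)$; (2) for $H(N,p_0,q_0)$: $\phi(\rho,\sigma)=\varsigma(-\sigma/2)\varsigma(\rho/2)\vartheta(\rho-q\sigma)$, with $N'=N/\gcd(N,p_0)$; (3) for $H(N,-q_0,p_0)$: $\phi(\rho,\sigma)=\varsigma(\sigma/2)\varsigma(\rho/2)\vartheta(\sigma+q\rho)$,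 with $N'=N/\gcd(N,q_0)$; (4) for $H(N,-p_0,q_0)$: $\phi(\rho,\sigma)=\varsigma(\sigma/2)\varsigma(\rho/2)\vartheta(-\rho-q\sigma)$, with $N'=N/\gcd(N,p_0)$.
   Context: $R(\theta)=\begin{pmatrix}\cos\theta & \sin\theta\\ -\sin\theta & \cos\theta\end{pmatrix}$. Let $P_1(\mathbb{R})=\mathbb{R}\cup\{\infty\}$ and $\mathcal P=P_1(\mathbb{R})\times P_1(\mathbb{R})$, with projective coordinates $(x,y)$ and angular coordinates $(\rho,\sigma)$ given by $x=\cot(\rho/2)$, $y=\cot(\sigma/2)$; functions on $\mathcal P$ are thus functions of $(\rho,\sigma)$ that are $2\pi$-periodic in each variable. $\lambda$ is the $\mathrm{SO}(2)\times\mathrm{SO}(2)$-invariant (Lebesgue) measure $d\rho\,d\sigma$ and $L^2(\mathcal P,\lambda,\mathbb{R})$ the real Hilbert space of square-integrable real functions on $\mathcal P$. For $g=\begin{pmatrix}a&b\\c&d\end{pmatrix}\in\mathrm{SL}(2,\mathbb{R})$: $xg=\frac{xa+c}{xb+d}$, $k_g(x)=\left(\frac{(xb+d)^2+(xa+c)^2}{1+x^2}\right)^{1/2}$, $s_g(x)=\frac{xb+d}{|xb+d|}$, and $(T'(g,h)\phi)(x,y)=k_g^{-3}(x)s_g(x)k_h^{-3}(y)s_h(y)\phi(xg,yh)$. A function $\phi$ is fixed by a subgroup $S$ if $T'(s)\phi=\phi$ in $L^2$ for all $s\in S$. $\varsigma(t)$ denotes the sign of $\sin t$. *)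

theory Defs
  imports "HOL-Analysis.Analysis"
begin

definition mat22 :: "real \<Rightarrow> real \<Rightarrow> real \<Rightarrow> real \<Rightarrow> real^2^2" where
  "mat22 a b c d = (\<chi> i j. if i = 1 then (if j = 1 then a else b) else (if j = 1 then c else d))"

definition Rot :: "real \<Rightarrow> real^2^2" where
  "Rot \<theta> = mat22 (cos \<theta>) (sin \<theta>) (- sin \<theta>) (cos \<theta>)"

text \<open>Right action x g = (x a + c)/(x b + d) on projective coordinates (finite part).\<close>
definition proj_act :: "real^2^2 \<Rightarrow> real \<Rightarrow> real" where
  "proj_act g x = (x * g$1$1 + g$2$1) / (x * g$1$2 + g$2$2)"

definition kfac :: "real^2^2 \<Rightarrow> real \<Rightarrow> real" where
  "kfac g x = sqrt (((x * g$1$2 + g$2$2)^2 + (x * g$1$1 + g$2$1)^2) / (1 + x^2))"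

definition sfac :: "real^2^2 \<Rightarrow> real \<Rightarrow> real" where
  "sfac g x = (x * g$1$2 + g$2$2) / \<bar>x * g$1$2 + g$2$2\<bar>"

text \<open>Angular coordinate of a finite projective point: the unique \<rho> in (0, 2 pi) with x = cot(\<rho>/2).\<close>
definition ang :: "real \<Rightarrow> real" where
  "ang x = pi - 2 * arctan x"

text \<open>The action T'(g,h) written in angular coordinates (\<rho>,\<sigma>), x = cot(\<rho>/2), y = cot(\<sigma>/2).
  Functions on P are represented by functions of (\<rho>,\<sigma>) that are 2 pi periodic in each variable.\<close>
definition Tp :: "(real^2^2) \<times> (real^2^2) \<Rightarrow> (real \<times> real \<Rightarrow> real) \<Rightarrow> real \<times> real \<Rightarrow> real" where
  "Tp gh \<phi> = (\<lambda>(\<rho>, \<sigma>).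
     (let g = fst gh; h = snd gh; x = cot (\<rho> / 2); y = cot (\<sigma> / 2) in
       inverse (kfac g x ^ 3) * sfac g x * inverse (kfac h y ^ 3) * sfac h y
         * \<phi> (ang (proj_act g x), ang (proj_act h y))))"

text \<open>Fundamental domain of P in angular coordinates, with Lebesgue measure d\<rho> d\<sigma>.\<close>
definition Pbox :: "(real \<times> real) set" where
  "Pbox = {0 .. 2 * pi} \<times> {0 .. 2 * pi}"

text \<open>(Representatives of) elements of L^2(P, \<lambda>, R).\<close>
definition L2P :: "(real \<times> real \<Rightarrow> real) \<Rightarrow> bool" where
  "L2P \<phi> \<longleftrightarrow> (\<forall>\<rho> \<sigma>. \<phi> (\<rho> + 2 * pi, \<sigma>) = \<phi> (\<rho>, \<sigma>) \<and> \<phi> (\<rho>, \<sigma> + 2 * pi) = \<phi> (\<rho>, \<sigma>))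
     \<and> \<phi> \<in> borel_measurable lborel \<and> set_integrable lborel Pbox (\<lambda>p. (\<phi> p)^2)"

definition fixed_by :: "((real^2^2) \<times> (real^2^2)) set \<Rightarrow> (real \<times> real \<Rightarrow> real) \<Rightarrow> bool" where
  "fixed_by S \<phi> \<longleftrightarrow> (\<forall>s\<in>S. AE p in lborel. p \<in> Pbox \<longrightarrow> Tp s \<phi> p = \<phi> p)"

definition H :: "int \<Rightarrow> int \<Rightarrow> int \<Rightarrow> ((real^2^2) \<times> (real^2^2)) set" where
  "H N a b = {(Rot (of_int a * \<theta>), Rot (of_int b * \<theta> + 2 * pi * of_int i / of_int N)) | \<theta> i.
               i \<in> {0 .. N - 1}}"

definition vsig :: "real \<Rightarrow> real" where
  "vsig t = sgn (sin t)"

definition admissible :: "real \<Rightarrow> (real \<Rightarrow> real) \<Rightarrow> bool" where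
  "admissible L \<Theta> \<longleftrightarrow> (\<forall>u. \<Theta> (u + L) = - \<Theta> u)
     \<and> \<Theta> \<in> borel_measurable lborel \<and> set_integrable lborel {0 .. L} (\<lambda>u. (\<Theta> u)^2)"

text \<open>The conclusion for one group G, period L and form F (\<Theta> \<mapsto> \<phi>):
  (i) there are nonzero fixed vectors;
  (ii) every fixed L^2 vector is a.e. of the form F \<Theta> with \<Theta> admissible;
  (iii) every F \<Theta> with \<Theta> admissible is a fixed L^2 vector;
  (iv)/(v) the (linear) map \<Theta> \<mapsto> F \<Theta> is, up to a positive constant factor, isometric from
  L^2([0,L]) and every element of L^2([0,L]) is the restriction of an admissible \<Theta>;
  hence the fixed space is isomorphic as a Hilbert space to L^2([0,L], du).\<close>
definition fixed_space_char ::
  "((real^2^2) \<times> (real^2^2)) set \<Rightarrow> real \<Rightarrow> ((real \<Rightarrow> real) \<Rightarrow> real \<times> real \<Rightarrow> real) \<Rightarrow> bool" where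
  "fixed_space_char G L F \<longleftrightarrow>
     (\<exists>\<phi>. L2P \<phi> \<and> fixed_by G \<phi> \<and> \<not> (AE p in lborel. p \<in> Pbox \<longrightarrow> \<phi> p = 0))
   \<and> (\<forall>\<phi>. L2P \<phi> \<and> fixed_by G \<phi> \<longrightarrow>
         (\<exists>\<Theta>. admissible L \<Theta> \<and> (AE p in lborel. p \<in> Pbox \<longrightarrow> \<phi> p = F \<Theta> p)))
   \<and> (\<forall>\<Theta>. admissible L \<Theta> \<longrightarrow> L2P (F \<Theta>) \<and> fixed_by G (F \<Theta>))
   \<and> (\<exists>c>0. \<forall>\<Theta>. admissible L \<Theta> \<longrightarrow>
         set_lebesgue_integral lborel Pbox (\<lambda>p. (F \<Theta> p)^2)
           = c * set_lebesgue_integral lborel {0 .. L} (\<lambda>u. (\<Theta> u)^2))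
   \<and> (\<forall>f. f \<in> borel_measurable lborel \<and> set_integrable lborel {0 .. L} (\<lambda>u. (f u)^2) \<longrightarrow>
         (\<exists>\<Theta>. admissible L \<Theta> \<and> (AE u in lborel. u \<in> {0 .. L} \<longrightarrow> \<Theta> u = f u)))"

end

theory Submission
  imports Defs
begin


lemma Rot_entries[simp]: "Rot s $1$1 = cos s" "Rot s $1$2 = sin s" "Rot s $2$1 = - sin s" "Rot s $2$2 = cos s"
  by (simp_all add: Rot_def mat22_def)

lemma kfac_Rot[simp]: "kfac (Rot s) x = 1"
proof -
  have "(x * sin s + cos s)^2 + (x * cos s - sin s)^2 = (1 + x^2) * ((sin s)^2 + (cos s)^2)"
    by algebra
  also have "\<dots> = 1 + x^2" by simp
  finally have e: "(x * sin s + cos s)^2 + (x * cos s - sin s)^2 = 1 + x^2" .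
  have "1 + x^2 \<noteq> 0" by (smt (verit) zero_le_power2)
  then show ?thesis by (simp add: kfac_def e)
qed

lemma proj_act_Rot:
  assumes "sin r \<noteq> 0"
  shows "proj_act (Rot s) (cot r) = cot (r + s)"
proof -
  have e1: "cot r * cos s - sin s = cos (r+s) / sin r"
    using assms by (simp add: cot_def cos_add field_simps)
  have e2: "cot r * sin s + cos s = sin (r+s) / sin r"
    using assms by (simp add: cot_def sin_add field_simps)
  have "proj_act (Rot s) (cot r) = (cot r * cos s - sin s) / (cot r * sin s + cos s)"
    by (simp add: proj_act_def)
  also have "\<dots> = cos (r+s) / sin (r+s)"
    unfolding e1 e2 using assms by simp
  finally show ?thesis by (simp add: cot_def)
qed

lemma sfac_Rot:
  assumes "sin r \<noteq> 0"
  shows "sfac (Rot s) (cot r) = vsig (r + s) * vsig r"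
proof -
  have e: "cot r * sin s + cos s = sin (r + s) / sin r"
    using assms by (simp add: cot_def sin_add field_simps)
  have "sfac (Rot s) (cot r) = sgn (sin (r + s) / sin r)"
    by (simp add: sfac_def e real_sgn_eq)
  also have "\<dots> = vsig (r + s) * vsig r"
    using assms unfolding vsig_def sgn_divide
    by (cases "sin r > 0") (auto simp: sgn_if)
  finally show ?thesis .
qed

lemma ang_cot:
  assumes "sin y \<noteq> 0"
  shows "ang (cot y) = 2 * y - 2 * pi * of_int \<lfloor>y / pi\<rfloor>"
proof -
  define k where "k = \<lfloor>y / pi\<rfloor>"
  define y' where "y' = y - pi * of_int k"
  have "of_int k \<le> y / pi" "y / pi < of_int k + 1" unfolding k_def by linarith+
  hence y1: "0 \<le> y'" "y' < pi" unfolding y'_def by (simp_all add: field_simps)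
  have yy: "y = y' + of_int k * pi" unfolding y'_def by simp
  have "sin y' \<noteq> 0"
  proof
    assume "sin y' = 0"
    then obtain i :: int where "y' = of_int i * pi" by (auto simp: sin_zero_iff_int2)
    hence "y = of_int (i + k) * pi" using yy by (simp add: algebra_simps)
    thus False using assms by (metis sin_zero_iff_int2)
  qed
  with y1 have y2: "0 < y'" by (metis order_le_less sin_zero)
  have ceq: "cot y = cot y'" unfolding yy cot_altdef by simp
  have "arctan (cot y') = pi/2 - y'"
  proof -
    have "tan (pi/2 - y') = cot y'" by (simp add: tan_cot')
    moreover have "- (pi/2) < pi/2 - y'" "pi/2 - y' < pi/2" using y1 y2 by auto
    ultimately show ?thesis by (metis arctan_tan)
  qed
  then show ?thesis unfolding ang_def ceq y'_def k_def by (simp add: algebra_simps)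
qed


lemma periodic_int:
  fixes f :: "real \<Rightarrow> 'a"
  assumes "\<And>x. f (x + c) = f x"
  shows "f (x + of_int j * c) = f x"
proof -
  have n: "f (y + real n * c) = f y" for y n
  proof (induction n arbitrary: y)
    case (Suc n)
    have "y + real (Suc n) * c = (y + c) + real n * c" by (simp add: algebra_simps)
    then show ?case using Suc.IH[of "y + c"] assms[of y] by metis
  qed simp
  show ?thesis
  proof (cases "j \<ge> 0")
    case True
    then show ?thesis using n[of x "nat j"] by simp
  next
    case False
    then have "f (x + of_int j * c) = f (x + of_int j * c + real (nat (-j)) * c)" using n by metis
    also have "\<dots> = f x" using False by simp
    finally show ?thesis .
  qed
qed

definition per2 :: "(real \<times> real \<Rightarrow> 'a) \<Rightarrow> bool" where
  "per2 \<phi> \<longleftrightarrow> (\<forall>\<rho> \<sigma>. \<phi> (\<rho> + 2 * pi, \<sigma>) = \<phi> (\<rho>, \<sigma>) \<and> \<phi> (\<rho>, \<sigma> + 2 * pi) = \<phi> (\<rho>, \<sigma>))"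

lemma per2_int:
  assumes "per2 \<phi>"
  shows "\<phi> (\<rho> + of_int j * (2*pi), \<sigma> + of_int k * (2*pi)) = \<phi> (\<rho>, \<sigma>)"
proof -
  have "\<phi> (\<rho> + of_int j * (2*pi), \<sigma> + of_int k * (2*pi)) = \<phi> (\<rho>, \<sigma> + of_int k * (2*pi))"
    using periodic_int[of "\<lambda>x. \<phi> (x, \<sigma> + of_int k * (2*pi))" "2*pi"] assms unfolding per2_def by blast
  also have "\<dots> = \<phi> (\<rho>, \<sigma>)"
    using periodic_int[of "\<lambda>x. \<phi> (\<rho>, x)" "2*pi"] assms unfolding per2_def by blast
  finally show ?thesis .
qed

lemma Tp_Rot:
  assumes "per2 \<phi>" "sin (\<rho>/2) \<noteq> 0" "sin (\<sigma>/2) \<noteq> 0" "sin (\<rho>/2 + u) \<noteq> 0" "sin (\<sigma>/2 + w) \<noteq> 0"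
  shows "Tp (Rot u, Rot w) \<phi> (\<rho>, \<sigma>) =
    vsig (\<rho>/2 + u) * vsig (\<rho>/2) * vsig (\<sigma>/2 + w) * vsig (\<sigma>/2) * \<phi> (\<rho> + 2*u, \<sigma> + 2*w)"
proof -
  have e1: "ang (cot (\<rho>/2 + u)) = \<rho> + 2*u + of_int (- \<lfloor>(\<rho>/2+u)/pi\<rfloor>) * (2*pi)"
    using ang_cot[OF assms(4)] by simp
  have e2: "ang (cot (\<sigma>/2 + w)) = \<sigma> + 2*w + of_int (- \<lfloor>(\<sigma>/2+w)/pi\<rfloor>) * (2*pi)"
    using ang_cot[OF assms(5)] by simp
  have "\<phi> (ang (cot (\<rho>/2 + u)), ang (cot (\<sigma>/2 + w))) = \<phi> (\<rho> + 2*u, \<sigma> + 2*w)"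
    unfolding e1 e2 by (rule per2_int[OF assms(1)])
  then show ?thesis
    unfolding Tp_def using assms
    by (simp add: Let_def proj_act_Rot sfac_Rot)
qed


lemma sets_lborel_pair: "sets (lborel \<Otimes>\<^sub>M lborel :: ('a::euclidean_space \<times> 'b::euclidean_space) measure) = sets borel"
  by (metis borel_prod sets_lborel sets_pair_measure_cong)

lemma AE_sin_ne: "AE x in lborel. sin (x/2 + c) \<noteq> (0::real)" for c :: real
proof -
  have sub: "sin (x/2 + c) \<noteq> 0" if "x \<notin> range (\<lambda>i::int. 2 * (of_int i * pi - c))" for x :: real
  proof
    assume "sin (x/2 + c) = 0"
    then obtain i :: int where "x/2 + c = of_int i * pi" by (auto simp: sin_zero_iff_int2)
    hence "x = 2 * (of_int i * pi - c)" by (simp add: algebra_simps)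
    thus False using that by blast
  qed
  have "AE x in lborel. x \<notin> range (\<lambda>i::int. 2 * (of_int i * pi - c))"
    by (rule AE_not_in[OF countable_imp_null_set_lborel]) simp
  then show ?thesis by eventually_elim (rule sub)
qed

lemma AE_lift_fst:
  assumes "AE x in lborel. P x"
  shows "AE p in (lborel :: ('a::euclidean_space \<times> 'b::euclidean_space) measure). P (fst p)"
proof -
  from AE_E3[OF assms] obtain N where N0: "\<And>x. x \<in> space lborel - N \<Longrightarrow> P x" and N2: "N \<in> null_sets lborel" by blast
  have N: "{x \<in> space lborel. \<not> P x} \<subseteq> N" "N \<in> null_sets lborel" using N0 N2 by auto
  have "N \<times> UNIV \<in> null_sets (lborel \<Otimes>\<^sub>M (lborel :: 'b measure))"
    using N(2) by (intro lborel.times_in_null_sets1) auto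
  hence "N \<times> UNIV \<in> null_sets (lborel :: ('a \<times> 'b) measure)" by (simp only: lborel_prod)
  then show ?thesis
    by (rule AE_I') (use N(1) in auto)
qed

lemma AE_lift_snd:
  assumes "AE x in lborel. P x"
  shows "AE p in (lborel :: ('a::euclidean_space \<times> 'b::euclidean_space) measure). P (snd p)"
proof -
  from AE_E3[OF assms] obtain N where N0: "\<And>x. x \<in> space lborel - N \<Longrightarrow> P x" and N2: "N \<in> null_sets lborel" by blast
  have N: "{x \<in> space lborel. \<not> P x} \<subseteq> N" "N \<in> null_sets lborel" using N0 N2 by auto
  have "UNIV \<times> N \<in> null_sets ((lborel :: 'a measure) \<Otimes>\<^sub>M lborel)"
    using N(2) by (intro lborel.times_in_null_sets2) auto
  hence "UNIV \<times> N \<in> null_sets (lborel :: ('a \<times> 'b) measure)" by (simp only: lborel_prod)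
  then show ?thesis
    by (rule AE_I') (use N(1) in auto)
qed

lemma null_sets_translate:
  fixes c :: "'a::euclidean_space"
  assumes "N \<in> null_sets lborel"
  shows "((+) c) -` N \<in> null_sets lborel"
proof -
  have Nb: "N \<in> sets borel" using assms null_setsD2 by auto
  have m: "((+) c) \<in> measurable lborel borel" by simp
  have "emeasure lborel (((+) c) -` N \<inter> space lborel) = emeasure (distr lborel borel ((+) c)) N"
    by (rule emeasure_distr[OF m Nb, symmetric])
  also have "\<dots> = 0" using assms by (simp add: lborel_distr_plus null_setsD1)
  moreover have "((+) c) -` N \<in> sets borel" using measurable_sets[OF m Nb] by simp
  ultimately show ?thesis by (auto simp: null_sets_def)
qed

lemma AE_translate:
  fixes c :: "'a::euclidean_space"
  assumes "AE x in lborel. P x"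
  shows "AE x in lborel. P (x + c)"
proof -
  from AE_E3[OF assms] obtain N where N0: "\<And>x. x \<in> space lborel - N \<Longrightarrow> P x" and N2: "N \<in> null_sets lborel" by blast
  have N: "{x \<in> space lborel. \<not> P x} \<subseteq> N" "N \<in> null_sets lborel" using N0 N2 by auto
  show ?thesis
    by (rule AE_I'[OF null_sets_translate[OF N(2), of c]]) (use N(1) in \<open>auto simp: add.commute\<close>)
qed



lemma AE_shear:
  fixes c d :: real
  assumes c: "c \<noteq> 0" and "AE p in lborel. P p"
  shows "AE q in lborel. P (fst q, c * snd q + d * fst q)"
proof -
  from AE_E3[OF assms(2)] obtain N where N0: "\<And>x. x \<in> space lborel - N \<Longrightarrow> P x" and N2: "N \<in> null_sets (lborel :: (real\<times>real) measure)" by blast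
  have N: "{x \<in> space lborel. \<not> P x} \<subseteq> N" "N \<in> null_sets (lborel :: (real\<times>real) measure)" using N0 N2 by auto
  have Nb[measurable]: "N \<in> sets borel" using N(2) null_setsD2 by auto
  define Q where "Q = (\<lambda>q. (fst q, c * snd q + d * fst q)) -` N"
  have Qb[measurable]: "Q \<in> sets borel" unfolding Q_def
    by (rule measurable_sets_borel[OF borel_measurable_continuous_onI Nb]) (intro continuous_intros)
  have "emeasure lborel Q = (\<integral>\<^sup>+ q. indicator Q q \<partial>(lborel \<Otimes>\<^sub>M lborel))"
    unfolding lborel_prod using Qb by simp
  also have "\<dots> = (\<integral>\<^sup>+ x. \<integral>\<^sup>+ u. indicator N (x, c * u + d * x) \<partial>lborel \<partial>lborel)"
    by (subst lborel.nn_integral_fst[symmetric]) (auto simp: Q_def indicator_def)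
  also have "\<dots> = (\<integral>\<^sup>+ x. ennreal (1 / \<bar>c\<bar>) * \<integral>\<^sup>+ y. indicator N (x, y) \<partial>lborel \<partial>lborel)"
  proof (rule nn_integral_cong)
    fix x :: real
    have "(\<integral>\<^sup>+ y. indicator N (x, y) \<partial>lborel) = \<bar>c\<bar> * (\<integral>\<^sup>+ u. indicator N (x, d * x + c * u) \<partial>lborel)"
      by (rule nn_integral_real_affine[OF _ c]) simp
    then show "(\<integral>\<^sup>+ u. indicator N (x, c * u + d * x) \<partial>lborel) = ennreal (1 / \<bar>c\<bar>) * \<integral>\<^sup>+ y. indicator N (x, y) \<partial>lborel"
      using c by (simp add: add.commute ennreal_mult[symmetric] mult.assoc[symmetric])
  qed
  also have "\<dots> = ennreal (1 / \<bar>c\<bar>) * (\<integral>\<^sup>+ x. \<integral>\<^sup>+ y. indicator N (x, y) \<partial>lborel \<partial>lborel)"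
    by (rule nn_integral_cmult) simp
  also have "(\<integral>\<^sup>+ x. \<integral>\<^sup>+ y. indicator N (x, y) \<partial>lborel \<partial>lborel) = emeasure lborel N"
    by (subst lborel.nn_integral_fst) (auto simp: lborel_prod)
  also have "\<dots> = 0" using N(2) by auto
  finally have "Q \<in> null_sets lborel" using Qb by auto
  then show ?thesis
    by (rule AE_I') (use N(1) in \<open>auto simp: Q_def\<close>)
qed


lemma AE_lborel_ex:
  assumes "AE x in (lborel :: 'a::euclidean_space measure). P x"
  shows "\<exists>x. P x"
proof (rule ccontr)
  assume "\<not> (\<exists>x. P x)"
  with assms have "AE x in (lborel :: 'a measure). False" by auto
  from AE_E2[OF this] show False by simp
qed

lemma AE_lborel_pair_iff:
  assumes "{p :: 'a::euclidean_space \<times> 'b::euclidean_space. P (fst p) (snd p)} \<in> sets borel"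
  shows "(AE x in lborel. AE y in lborel. P x y) \<longleftrightarrow> (AE p in lborel. P (fst p) (snd p))"
proof -
  have "{p \<in> space (lborel \<Otimes>\<^sub>M lborel). P (fst p) (snd p)} \<in> sets (lborel \<Otimes>\<^sub>M (lborel :: 'b measure))"
    using assms unfolding lborel_prod by simp
  from lborel_pair.AE_pair_iff[OF this] show ?thesis by (simp only: lborel_prod)
qed

lemma AE_lborel_commute:
  assumes "{p :: 'a::euclidean_space \<times> 'b::euclidean_space. P (fst p) (snd p)} \<in> sets borel"
  shows "(AE x in lborel. AE y in lborel. P x y) \<longleftrightarrow> (AE y in lborel. AE x in lborel. P x y)"
proof -
  have "{p \<in> space (lborel \<Otimes>\<^sub>M lborel). P (fst p) (snd p)} \<in> sets (lborel \<Otimes>\<^sub>M (lborel :: 'b measure))"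
    using assms unfolding lborel_prod by simp
  from lborel_pair.AE_commute[OF this] show ?thesis .
qed

definition sq :: "real \<Rightarrow> real" where "sq x = x / (1 + \<bar>x\<bar>)"
definition sqinv :: "real \<Rightarrow> real" where "sqinv y = y / (1 - \<bar>y\<bar>)"

lemma sqinv_sq[simp]: "sqinv (sq x) = x"
proof -
  have p: "1 + \<bar>x\<bar> > 0" by simp
  have "\<bar>sq x\<bar> = \<bar>x\<bar> / (1 + \<bar>x\<bar>)" unfolding sq_def using p by simp
  hence "1 - \<bar>sq x\<bar> = 1 / (1 + \<bar>x\<bar>)" using p by (simp add: field_simps)
  thus ?thesis unfolding sqinv_def using p by (simp add: sq_def)
qed

lemma inv_fun:
  fixes g :: "real \<times> real \<Rightarrow> real"
  assumes g[measurable]: "g \<in> borel_measurable borel"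
    and inv: "\<And>s. AE q in lborel. g (fst q + s, snd q) = g q"
  shows "\<exists>h \<in> borel_measurable borel. AE q in lborel. g q = h (snd q)"
proof -
  define D where "D = {z :: (real \<times> real) \<times> real. g (fst (fst z) + snd z, snd (fst z)) \<noteq> g (fst z)}"
  have gp[measurable]: "g \<in> borel_measurable (borel \<Otimes>\<^sub>M borel)" using g by (simp add: borel_prod)
  have "{z \<in> space ((borel \<Otimes>\<^sub>M borel) \<Otimes>\<^sub>M borel). g (fst (fst z) + snd z, snd (fst z)) \<noteq> g (fst z)} \<in> sets ((borel \<Otimes>\<^sub>M borel) \<Otimes>\<^sub>M (borel::real measure))"
    by measurable
  hence Db: "D \<in> sets borel" unfolding D_def by (simp only: borel_prod) simp
  hence Dm: "D \<in> sets (lborel \<Otimes>\<^sub>M lborel)" unfolding sets_lborel_pair .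
  have sec0: "emeasure lborel ((\<lambda>q. (q, s)) -` D) = 0" for s
  proof -
    have "(\<lambda>q. (q, s)) -` D \<in> sets borel"
      by (rule measurable_sets_borel[OF _ Db]) simp
    moreover have "{q \<in> space lborel. \<not> g (fst q + s, snd q) = g q} = (\<lambda>q. (q, s)) -` D"
      by (auto simp: D_def)
    ultimately show ?thesis using inv[of s] AE_iff_measurable[of "(\<lambda>q. (q, s)) -` D" lborel] by simp
  qed
  have "emeasure (lborel \<Otimes>\<^sub>M lborel) D = 0"
    using lborel_pair.emeasure_pair_measure_alt2[OF Dm] by (simp add: sec0)
  hence "(\<integral>\<^sup>+ q. emeasure lborel (Pair q -` D) \<partial>lborel) = 0"
    using lborel.emeasure_pair_measure_alt[OF Dm] by simp
  moreover have Em: "(\<lambda>q. emeasure lborel (Pair q -` D)) \<in> borel_measurable (lborel :: (real \<times> real) measure)"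
    using lborel_pair.measurable_emeasure_Pair1[OF Dm] by simp
  ultimately have AEq: "AE q in lborel. emeasure lborel (Pair q -` D) = 0"
    using nn_integral_0_iff_AE by blast
  have Emb: "(\<lambda>q. emeasure lborel (Pair q -` D)) \<in> borel_measurable borel"
    using Em by simp
  have Eset: "{p :: real \<times> real. emeasure lborel (Pair (fst p, snd p) -` D) = 0} \<in> sets borel"
  proof -
    have "{p :: real \<times> real. emeasure lborel (Pair (fst p, snd p) -` D) = 0} = (\<lambda>q. emeasure lborel (Pair q -` D)) -` {0}"
      by auto
    also have "\<dots> \<in> sets borel" by (rule measurable_sets_borel[OF Emb]) simp
    finally show ?thesis .
  qed
  from AEq have "AE x in lborel. AE u in lborel. emeasure lborel (Pair (x, u) -` D) = 0"
    using AE_lborel_pair_iff[OF Eset] by simp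
  hence AEu: "AE u in lborel. AE x in lborel. emeasure lborel (Pair (x, u) -` D) = 0"
    using AE_lborel_commute[OF Eset] by simp
  define F where "F u = (LINT x|lborel. indicator {0..1::real} x * (g (x, u) / (1 + \<bar>g (x, u)\<bar>)))" for u
  define h where "h u = sqinv (F u)" for u
  have Fm[measurable]: "F \<in> borel_measurable borel"
    unfolding F_def by (rule lborel.borel_measurable_lebesgue_integral) measurable
  have hm: "h \<in> borel_measurable borel"
    unfolding h_def sqinv_def by measurable
  have good: "AE x in lborel. g (x, u) = h u" if Eu: "AE x in lborel. emeasure lborel (Pair (x, u) -` D) = 0" for u
  proof -
    obtain x0 where x0: "emeasure lborel (Pair (x0, u) -` D) = 0" using AE_lborel_ex[OF Eu] by blast
    have "Pair (x0, u) -` D \<in> sets borel"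
      by (rule measurable_sets_borel[OF _ Db]) simp
    moreover have "{s \<in> space lborel. \<not> g (x0 + s, u) = g (x0, u)} = Pair (x0, u) -` D"
      by (auto simp: D_def)
    ultimately have "AE s in lborel. g (x0 + s, u) = g (x0, u)"
      using x0 AE_iff_measurable[of "Pair (x0, u) -` D" lborel] by simp
    from AE_translate[OF this, of "- x0"] have c: "AE y in lborel. g (y, u) = g (x0, u)" by simp
    have "F u = (LINT x|lborel. indicator {0..1::real} x * sq (g (x0, u)))"
      unfolding F_def sq_def[symmetric]
      by (rule integral_cong_AE) (use c in \<open>auto elim!: eventually_mono simp: sq_def\<close>)
    also have "\<dots> = sq (g (x0, u))" by simp
    finally have "h u = g (x0, u)" unfolding h_def by simp
    with c show ?thesis by simp
  qed
  have AE2: "AE u in lborel. AE x in lborel. g (x, u) = h u"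
    using AEu by eventually_elim (rule good)
  have Gset: "{p :: real \<times> real. g (fst p, snd p) = h (snd p)} \<in> sets borel"
  proof -
    note hm[measurable]
    have "{p \<in> space (borel \<Otimes>\<^sub>M borel). g p = h (snd p)} \<in> sets (borel \<Otimes>\<^sub>M (borel::real measure))"
      by measurable
    thus ?thesis by (simp only: borel_prod) simp
  qed
  from AE2 have "AE x in lborel. AE u in lborel. g (x, u) = h u"
    using AE_lborel_commute[OF Gset] by simp
  hence "AE q in lborel. g q = h (snd q)"
    using AE_lborel_pair_iff[OF Gset] by simp
  with hm show ?thesis by blast
qed


definition sgi :: "int \<Rightarrow> real" where "sgi k = (if even k then 1 else -1)"

lemma sgi_add: "sgi (a + b) = sgi a * sgi b" by (auto simp: sgi_def)
lemma sgi_minus[simp]: "sgi (- a) = sgi a" by (auto simp: sgi_def)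
lemma sgi_sq[simp]: "sgi a * sgi a = 1" by (auto simp: sgi_def)
lemma sgi_1[simp]: "sgi 1 = -1" by (auto simp: sgi_def)

lemma anti_int:
  fixes \<Theta> :: "real \<Rightarrow> real"
  assumes "\<And>u. \<Theta> (u + L) = - \<Theta> u"
  shows "\<Theta> (u + of_int k * L) = sgi k * \<Theta> u"
proof -
  have p2: "\<Theta> (x + 2 * L) = \<Theta> x" for x
    using assms[of x] assms[of "x + L"] by (simp add: algebra_simps)
  have ev: "\<Theta> (x + of_int j * (2 * L)) = \<Theta> x" for x j
    by (rule periodic_int[of \<Theta> "2*L"]) (use p2 in auto)
  show ?thesis
  proof (cases "even k")
    case True
    then obtain j where "k = 2 * j" by auto
    then show ?thesis using ev[of u j] by (simp add: sgi_def algebra_simps)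
  next
    case False
    then obtain j where "k = 2 * j + 1" by (metis oddE)
    then have "u + of_int k * L = (u + of_int j * (2 * L)) + L" by (simp add: algebra_simps)
    then show ?thesis using ev[of u j] assms[of "u + of_int j * (2 * L)"] False by (simp add: sgi_def add.assoc)
  qed
qed

lemma shift_comb:
  fixes h :: "real \<Rightarrow> real"
  assumes "AE u in lborel. h (u + d1) = e1 * h u" "AE u in lborel. h (u + d2) = e2 * h u"
  shows "AE u in lborel. h (u + (d1 + d2)) = e1 * e2 * h u"
proof -
  have "AE u in lborel. h (u + d2 + d1) = e1 * h (u + d2)" using AE_translate[OF assms(1), of d2] by simp
  with assms(2) show ?thesis by eventually_elim (simp add: algebra_simps)
qed

lemma shift_neg:
  fixes h :: "real \<Rightarrow> real"
  assumes "AE u in lborel. h (u + d) = e * h u" "e * e = 1"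
  shows "AE u in lborel. h (u + - d) = e * h u"
proof -
  have "AE u in lborel. h (u + - d + d) = e * h (u + - d)" using AE_translate[OF assms(1), of "-d"] by simp
  then show ?thesis
  proof eventually_elim
    case (elim u)
    then have "e * h u = e * e * h (u + - d)" by simp
    then show ?case using assms(2) by simp
  qed
qed

lemma shift_int:
  fixes h :: "real \<Rightarrow> real"
  assumes "AE u in lborel. h (u + d) = sgi e * h u"
  shows "AE u in lborel. h (u + of_int k * d) = sgi (e * k) * h u"
proof -
  have n: "AE u in lborel. h (u + real n * d) = sgi (e * int n) * h u" for n
  proof (induction n)
    case 0 then show ?case by (simp add: sgi_def)
  next
    case (Suc n)
    from shift_comb[OF assms Suc] show ?case
      by (simp add: algebra_simps sgi_add)
  qed
  show ?thesis
  proof (cases "k \<ge> 0")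
    case True
    then show ?thesis using n[of "nat k"] by simp
  next
    case False
    from shift_neg[OF n[of "nat (-k)"]] False show ?thesis by simp
  qed
qed

definition ext :: "real \<Rightarrow> (real \<Rightarrow> real) \<Rightarrow> real \<Rightarrow> real" where
  "ext L f u = sgi \<lfloor>u / L\<rfloor> * f (u - L * of_int \<lfloor>u / L\<rfloor>)"

lemma ext_anti:
  assumes "L > 0"
  shows "ext L f (u + L) = - ext L f u"
proof -
  have "(u + L) / L = u / L + 1" using assms by (simp add: field_simps)
  hence "\<lfloor>(u + L) / L\<rfloor> = \<lfloor>u / L\<rfloor> + 1" by simp
  then show ?thesis unfolding ext_def by (simp add: sgi_add algebra_simps)
qed

lemma ext_eq:
  assumes "L > 0" "0 \<le> u" "u < L"
  shows "ext L f u = f u"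
proof -
  have "\<lfloor>u / L\<rfloor> = 0" using assms by (simp add: floor_eq_iff)
  then show ?thesis unfolding ext_def by (simp add: sgi_def)
qed

lemma ext_meas[measurable]:
  assumes [measurable]: "f \<in> borel_measurable borel"
  shows "ext L f \<in> borel_measurable borel"
  unfolding ext_def sgi_def by measurable

lemma ext_AE:
  assumes "L > 0" "AE u in lborel. h (u + L) = - h u"
  shows "AE u in lborel. ext L h u = h u"
proof -
  have a: "AE u in lborel. h (u + L) = sgi 1 * h u" using assms(2) by simp
  have "\<forall>k. AE u in lborel. h (u + of_int k * L) = sgi k * h u"
    using shift_int[OF a] by simp
  hence "AE u in lborel. \<forall>k. h (u + of_int k * L) = sgi k * h u"
    by (simp add: AE_all_countable)
  then show ?thesis
  proof eventually_elim
    case (elim u)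
    from elim[rule_format, of "- \<lfloor>u / L\<rfloor>"]
    have "h (u - L * of_int \<lfloor>u / L\<rfloor>) = sgi \<lfloor>u / L\<rfloor> * h u" by (simp add: algebra_simps)
    then show ?case unfolding ext_def by (simp add: mult.assoc[symmetric])
  qed
qed


definition IS :: "(real \<Rightarrow> real) \<Rightarrow> real set \<Rightarrow> ennreal" where
  "IS G S = (\<integral>\<^sup>+ x. indicator S x * ennreal (G x) \<partial>lborel)"

lemma IS_trans:
  assumes [measurable]: "G \<in> borel_measurable borel" and per: "\<And>x. G (x + s) = G x"
  shows "IS G {a..<b} = IS G {a+s..<b+s}"
proof -
  have "IS G {a+s..<b+s} = (\<integral>\<^sup>+ x. indicator {a+s..<b+s} (s + x) * ennreal (G (s + x)) \<partial>lborel)"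
    unfolding IS_def using nn_integral_real_affine[of "\<lambda>x. indicator {a+s..<b+s} x * ennreal (G x)" 1 s]
    by simp
  also have "\<dots> = IS G {a..<b}"
    unfolding IS_def by (intro nn_integral_cong) (auto simp: indicator_def per add.commute)
  finally show ?thesis by simp
qed

lemma IS_split:
  assumes [measurable]: "G \<in> borel_measurable borel" and "a \<le> b" "b \<le> c"
  shows "IS G {a..<c} = IS G {a..<b} + IS G {b..<c}"
proof -
  have "IS G {a..<c} = (\<integral>\<^sup>+ x. indicator {a..<b} x * ennreal (G x) + indicator {b..<c} x * ennreal (G x) \<partial>lborel)"
    unfolding IS_def using assms by (intro nn_integral_cong) (auto simp: indicator_def)
  also have "\<dots> = IS G {a..<b} + IS G {b..<c}"
    unfolding IS_def by (rule nn_integral_add) auto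
  finally show ?thesis .
qed

lemma IS_closed:
  "IS G {a..b} = IS G {a..<b}"
  unfolding IS_def
  by (rule nn_integral_cong_AE) (use AE_lborel_singleton[of b] in \<open>eventually_elim, auto simp: indicator_def\<close>)

lemma IS_per1:
  assumes [measurable]: "G \<in> borel_measurable borel" and per: "\<And>x. G (x + L) = G x" and L: "L > 0"
  shows "IS G {t..<t+L} = IS G {0..<L}"
proof -
  define k where "k = \<lceil>t / L\<rceil>"
  define b where "b = of_int k * L"
  have "t / L \<le> of_int k" "of_int k < t / L + 1" unfolding k_def by linarith+
  hence tb: "t \<le> b" "b < t + L" unfolding b_def using L by (simp_all add: field_simps)
  have perk: "G (x + of_int j * L) = G x" for x j by (rule periodic_int) (rule per)
  have "IS G {t..<t+L} = IS G {t..<b} + IS G {b..<t+L}" using tb by (intro IS_split) auto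
  also have "IS G {t..<b} = IS G {t+L..<b+L}" by (rule IS_trans) (auto simp: per)
  also have "IS G {t+L..<b+L} + IS G {b..<t+L} = IS G {b..<t+L} + IS G {t+L..<b+L}" by (simp add: add.commute)
  also have "\<dots> = IS G {b..<b+L}"
    using tb by (intro IS_split[symmetric]) auto
  also have "IS G {b..<b+L} = IS G {b + (- b)..<b + L + (- b)}"
    by (rule IS_trans) (use perk[of _ "- k"] in \<open>auto simp: b_def\<close>)
  finally show ?thesis by (simp add: add.commute)
qed

lemma IS_pern:
  assumes [measurable]: "G \<in> borel_measurable borel" and per: "\<And>x. G (x + L) = G x" and L: "L > 0"
  shows "IS G {t..<t + real n * L} = of_nat n * IS G {0..<L}"
proof (induction n)
  case 0 then show ?case by (simp add: IS_def)
next
  case (Suc n)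
  have "IS G {t..<t + real (Suc n) * L} = IS G {t..<t + real n * L} + IS G {t + real n * L..<t + real n * L + L}"
    using L by (subst IS_split[of _ _ "t + real n * L"]) (auto simp: algebra_simps)
  also have "\<dots> = of_nat n * IS G {0..<L} + IS G {0..<L}"
    using Suc IS_per1[OF assms] by simp
  finally show ?case by (simp add: algebra_simps)
qed

lemma inner_int:
  assumes [measurable]: "G \<in> borel_measurable borel" and per: "\<And>x. G (x + L) = G x" and L: "L > 0"
    and \<beta>: "\<beta> \<noteq> 0" and m: "2 * pi * \<beta> = of_int m * L"
  shows "(\<integral>\<^sup>+ \<sigma>. indicator {0..2*pi} \<sigma> * ennreal (G (a + \<beta> * \<sigma>)) \<partial>lborel)
       = ennreal (of_int \<bar>m\<bar> / \<bar>\<beta>\<bar>) * IS G {0..<L}"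
proof -
  define f where "f v = indicator {0..2*pi} ((v - a) / \<beta>) * ennreal (G v)" for v
  have fm[measurable]: "f \<in> borel_measurable borel" unfolding f_def by measurable
  have "(\<integral>\<^sup>+ v. f v \<partial>lborel) = ennreal \<bar>\<beta>\<bar> * (\<integral>\<^sup>+ \<sigma>. f (a + \<beta> * \<sigma>) \<partial>lborel)"
    by (rule nn_integral_real_affine[OF fm \<beta>])
  also have "(\<lambda>\<sigma>. f (a + \<beta> * \<sigma>)) = (\<lambda>\<sigma>. indicator {0..2*pi} \<sigma> * ennreal (G (a + \<beta> * \<sigma>)))"
    unfolding f_def using \<beta> by auto
  finally have e1: "(\<integral>\<^sup>+ v. f v \<partial>lborel) = ennreal \<bar>\<beta>\<bar> * (\<integral>\<^sup>+ \<sigma>. indicator {0..2*pi} \<sigma> * ennreal (G (a + \<beta> * \<sigma>)) \<partial>lborel)" .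
  define t where "t = min a (a + 2 * pi * \<beta>)"
  have len: "\<bar>2 * pi * \<beta>\<bar> = real (nat \<bar>m\<bar>) * L" using m L by (simp add: abs_mult)
  have "{v. (v - a) / \<beta> \<in> {0..2*pi}} = {t..t + \<bar>2 * pi * \<beta>\<bar>}"
  proof (cases "\<beta> > 0")
    case True
    then show ?thesis unfolding t_def by (auto simp: field_simps min_def)
  next
    case False
    then have "\<beta> < 0" using \<beta> by simp
    then have "pi * \<beta> < 0" by (simp add: mult_pos_neg)
    have "(v - a) / \<beta> \<in> {0..2*pi} \<longleftrightarrow> v \<in> {a + 2 * pi * \<beta>..a}" for v
    proof -
      have "0 \<le> (v - a) / \<beta> \<longleftrightarrow> v \<le> a" using \<open>\<beta> < 0\<close> by (simp add: zero_le_divide_iff)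
      moreover have "(v - a) / \<beta> \<le> 2 * pi \<longleftrightarrow> a + 2 * pi * \<beta> \<le> v"
        using neg_divide_le_eq[OF \<open>\<beta> < 0\<close>, of "v - a" "2 * pi"] by (simp add: mult.commute) linarith
      ultimately show ?thesis by (simp only: atLeastAtMost_iff) (rule conj_commute)
    qed
    moreover have "t = a + 2 * pi * \<beta>" "\<bar>2 * pi * \<beta>\<bar> = - (2 * pi * \<beta>)"
      using \<open>pi * \<beta> < 0\<close> unfolding t_def by auto
    ultimately show ?thesis by (simp only: set_eq_iff mem_Collect_eq) simp
  qed
  hence mem: "(v - a) / \<beta> \<in> {0..2*pi} \<longleftrightarrow> v \<in> {t..t + \<bar>2 * pi * \<beta>\<bar>}" for v
    by (simp only: set_eq_iff mem_Collect_eq)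
  have "(\<integral>\<^sup>+ v. f v \<partial>lborel) = IS G {t..t + \<bar>2 * pi * \<beta>\<bar>}"
    unfolding IS_def f_def indicator_def mem ..
  also have "\<dots> = of_nat (nat \<bar>m\<bar>) * IS G {0..<L}"
    unfolding IS_closed len by (rule IS_pern[OF assms(1) per L])
  finally have e2: "(\<integral>\<^sup>+ v. f v \<partial>lborel) = of_nat (nat \<bar>m\<bar>) * IS G {0..<L}" .
  define X where "X = (\<integral>\<^sup>+ \<sigma>. indicator {0..2*pi} \<sigma> * ennreal (G (a + \<beta> * \<sigma>)) \<partial>lborel)"
  have one: "ennreal (1 / \<bar>\<beta>\<bar>) * ennreal \<bar>\<beta>\<bar> = 1"
    using \<beta> by (simp add: ennreal_mult[symmetric])
  have "X = ennreal (1 / \<bar>\<beta>\<bar>) * (ennreal \<bar>\<beta>\<bar> * X)"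
    by (simp only: mult.assoc[symmetric] one mult_1)
  also have "ennreal \<bar>\<beta>\<bar> * X = of_nat (nat \<bar>m\<bar>) * IS G {0..<L}"
    using e1 e2 unfolding X_def by simp
  also have "ennreal (1 / \<bar>\<beta>\<bar>) * (of_nat (nat \<bar>m\<bar>) * IS G {0..<L}) = ennreal (of_int \<bar>m\<bar> / \<bar>\<beta>\<bar>) * IS G {0..<L}"
  proof -
    have "ennreal (1 / \<bar>\<beta>\<bar>) * of_nat (nat \<bar>m\<bar>) = ennreal (of_int \<bar>m\<bar> / \<bar>\<beta>\<bar>)"
      by (simp only: ennreal_of_nat_eq_real_of_nat ennreal_mult[symmetric] abs_ge_zero divide_nonneg_nonneg zero_le_one of_nat_0_le_iff) simp
    then show ?thesis by (simp only: mult.assoc[symmetric])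
  qed
  finally show ?thesis unfolding X_def .
qed


lemma meas_pair_lborel:
  assumes "f \<in> borel_measurable (borel \<Otimes>\<^sub>M borel)"
  shows "f \<in> borel_measurable (lborel \<Otimes>\<^sub>M lborel)"
  using assms by (simp add: measurable_cong_sets[OF sets_pair_measure_cong[OF sets_lborel sets_lborel] refl])

lemma Pbox_sets[measurable]: "Pbox \<in> sets (borel \<Otimes>\<^sub>M borel)"
  unfolding Pbox_def by (intro pair_measureI) auto

lemma box_int:
  assumes Gm[measurable]: "G \<in> borel_measurable borel" and per: "\<And>x. G (x + L) = G x" and L: "L > 0"
    and \<beta>: "\<beta> \<noteq> 0" and m: "2 * pi * \<beta> = of_int m * L"
  shows "(\<integral>\<^sup>+ p. indicator Pbox p * ennreal (G (\<alpha> * fst p + \<beta> * snd p)) \<partial>lborel)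
       = ennreal (2 * pi * (of_int \<bar>m\<bar> / \<bar>\<beta>\<bar>)) * IS G {0..<L}"
proof -
  have M: "(\<lambda>p. indicator Pbox p * ennreal (G (\<alpha> * fst p + \<beta> * snd p))) \<in> borel_measurable (lborel \<Otimes>\<^sub>M lborel)"
    by (rule meas_pair_lborel) measurable
  have "(\<integral>\<^sup>+ p. indicator Pbox p * ennreal (G (\<alpha> * fst p + \<beta> * snd p)) \<partial>lborel)
      = (\<integral>\<^sup>+ p. indicator Pbox p * ennreal (G (\<alpha> * fst p + \<beta> * snd p)) \<partial>(lborel \<Otimes>\<^sub>M lborel))"
    by (simp only: lborel_prod)
  also have "\<dots> = (\<integral>\<^sup>+ \<rho>. \<integral>\<^sup>+ \<sigma>. indicator Pbox (\<rho>, \<sigma>) * ennreal (G (\<alpha> * \<rho> + \<beta> * \<sigma>)) \<partial>lborel \<partial>lborel)"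
    using lborel.nn_integral_fst[OF M, symmetric] by simp
  also have "\<dots> = (\<integral>\<^sup>+ \<rho>. indicator {0..2*pi} \<rho> * (ennreal (of_int \<bar>m\<bar> / \<bar>\<beta>\<bar>) * IS G {0..<L}) \<partial>lborel)"
  proof (rule nn_integral_cong)
    fix \<rho> :: real
    have "(\<integral>\<^sup>+ \<sigma>. indicator Pbox (\<rho>, \<sigma>) * ennreal (G (\<alpha> * \<rho> + \<beta> * \<sigma>)) \<partial>lborel)
        = (\<integral>\<^sup>+ \<sigma>. indicator {0..2*pi} \<rho> * (indicator {0..2*pi} \<sigma> * ennreal (G (\<alpha> * \<rho> + \<beta> * \<sigma>))) \<partial>lborel)"
      by (intro nn_integral_cong) (auto simp: Pbox_def indicator_def)
    also have "\<dots> = indicator {0..2*pi} \<rho> * (\<integral>\<^sup>+ \<sigma>. indicator {0..2*pi} \<sigma> * ennreal (G (\<alpha> * \<rho> + \<beta> * \<sigma>)) \<partial>lborel)"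
      by (rule nn_integral_cmult) measurable
    also have "\<dots> = indicator {0..2*pi} \<rho> * (ennreal (of_int \<bar>m\<bar> / \<bar>\<beta>\<bar>) * IS G {0..<L})"
      by (simp only: inner_int[OF Gm per L \<beta> m])
    finally show "(\<integral>\<^sup>+ \<sigma>. indicator Pbox (\<rho>, \<sigma>) * ennreal (G (\<alpha> * \<rho> + \<beta> * \<sigma>)) \<partial>lborel)
        = indicator {0..2*pi} \<rho> * (ennreal (of_int \<bar>m\<bar> / \<bar>\<beta>\<bar>) * IS G {0..<L})" .
  qed
  also have "\<dots> = (ennreal (of_int \<bar>m\<bar> / \<bar>\<beta>\<bar>) * IS G {0..<L}) * emeasure lborel {0..2*pi}"
    by (simp only: mult.commute[of "indicator _ _"] nn_integral_cmult_indicator sets_lborel atLeastAtMost_borel)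
  also have "\<dots> = ennreal (2 * pi * (of_int \<bar>m\<bar> / \<bar>\<beta>\<bar>)) * IS G {0..<L}"
    by (simp add: ennreal_mult[symmetric] mult_ac)
  finally show ?thesis .
qed


lemma vsig_pi: "vsig (x + pi) = - vsig x"
  by (simp add: vsig_def sgn_minus)

lemma vsig_minus: "vsig (- x) = - vsig x"
  by (simp add: vsig_def sgn_minus)

lemma vsig_sq: "sin x \<noteq> 0 \<Longrightarrow> vsig x * vsig x = 1"
  by (auto simp: vsig_def sgn_if)

lemma vsig_meas[measurable]: "vsig \<in> borel_measurable borel"
  unfolding vsig_def by measurable

lemma AE_lin:
  fixes \<alpha> \<beta> :: real
  assumes "\<beta> \<noteq> 0" "AE u in lborel. R u"
  shows "AE p in lborel. R (\<alpha> * fst p + \<beta> * snd p)"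
proof -
  have "AE q in (lborel :: (real \<times> real) measure). R (snd q)" by (rule AE_lift_snd[OF assms(2)])
  from AE_shear[OF assms(1) this, of \<alpha>] show ?thesis by (simp add: add.commute)
qed

lemma AE_unlin:
  fixes \<alpha> \<beta> :: real
  assumes "\<beta> \<noteq> 0" "{u. R u} \<in> sets borel" "AE p in lborel. R (\<alpha> * fst p + \<beta> * snd p)"
  shows "AE u in lborel. R u"
proof -
  have "AE q in lborel. R (\<alpha> * fst q + \<beta> * ((1 / \<beta>) * snd q + (- \<alpha> / \<beta>) * fst q))"
    using AE_shear[OF _ assms(3), of "1 / \<beta>" "- \<alpha> / \<beta>"] assms(1) by simp
  hence "AE q in (lborel :: (real \<times> real) measure). R (snd q)"
    using assms(1) by (simp add: field_simps)
  moreover have "{p :: real \<times> real. R (snd p)} \<in> sets borel"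
  proof -
    have "{p :: real \<times> real. R (snd p)} = snd -` {u. R u}" by auto
    also have "\<dots> \<in> sets borel"
      by (rule measurable_sets_borel[OF borel_measurable_continuous_onI assms(2)]) (intro continuous_intros)
    finally show ?thesis .
  qed
  moreover have "(AE x in (lborel :: real measure). AE u in (lborel :: real measure). R u)
     = (AE p in (lborel :: (real \<times> real) measure). R (snd p))"
    if "{p :: real \<times> real. R (snd p)} \<in> sets borel"
    by (rule AE_lborel_pair_iff[of "\<lambda>x u. R u", simplified]) (use that in simp)
  ultimately have "AE x in (lborel :: real measure). AE u in lborel. R u"
    by simp
  then obtain x :: real where "AE u in lborel. R u" using AE_lborel_ex by blast
  then show ?thesis .
qed

lemma ext_R2:
  fixes Q :: "real \<times> real \<Rightarrow> bool"
  assumes "per2 Q" "AE p in lborel. p \<in> Pbox \<longrightarrow> Q p"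
  shows "AE p in lborel. Q p"
proof -
  have "\<forall>jk :: int \<times> int. AE p in lborel. p + (of_int (fst jk) * (2*pi), of_int (snd jk) * (2*pi)) \<in> Pbox
           \<longrightarrow> Q p"
  proof
    fix jk :: "int \<times> int"
    from AE_translate[OF assms(2), of "(of_int (fst jk) * (2*pi), of_int (snd jk) * (2*pi))"]
    show "AE p in lborel. p + (of_int (fst jk) * (2*pi), of_int (snd jk) * (2*pi)) \<in> Pbox \<longrightarrow> Q p"
    proof eventually_elim
      case (elim p)
      have "Q (p + (of_int (fst jk) * (2*pi), of_int (snd jk) * (2*pi))) = Q p"
        using per2_int[OF assms(1), of "fst p" "fst jk" "snd p" "snd jk"] by (cases p) simp
      with elim show ?case by simp
    qed
  qed
  hence "AE p in lborel. \<forall>jk :: int \<times> int. p + (of_int (fst jk) * (2*pi), of_int (snd jk) * (2*pi)) \<in> Pbox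
           \<longrightarrow> Q p"
    by (rule AE_all_countable[THEN iffD2])
  then show ?thesis
  proof eventually_elim
    case (elim p)
    obtain \<rho> \<sigma> where p: "p = (\<rho>, \<sigma>)" by (cases p)
    define j where "j = - \<lfloor>\<rho> / (2*pi)\<rfloor>"
    define k where "k = - \<lfloor>\<sigma> / (2*pi)\<rfloor>"
    have in1: "0 \<le> \<rho> + of_int j * (2*pi)" "\<rho> + of_int j * (2*pi) \<le> 2 * pi"
    proof -
      have "of_int \<lfloor>\<rho> / (2*pi)\<rfloor> * (2*pi) \<le> \<rho>" "\<rho> < (of_int \<lfloor>\<rho> / (2*pi)\<rfloor> + 1) * (2*pi)"
        by (simp_all add: floor_divide_lower floor_divide_upper)
      then show "0 \<le> \<rho> + of_int j * (2*pi)" "\<rho> + of_int j * (2*pi) \<le> 2 * pi"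
        unfolding j_def by (simp_all add: algebra_simps)
    qed
    have in2: "0 \<le> \<sigma> + of_int k * (2*pi)" "\<sigma> + of_int k * (2*pi) \<le> 2 * pi"
    proof -
      have "of_int \<lfloor>\<sigma> / (2*pi)\<rfloor> * (2*pi) \<le> \<sigma>" "\<sigma> < (of_int \<lfloor>\<sigma> / (2*pi)\<rfloor> + 1) * (2*pi)"
        by (simp_all add: floor_divide_lower floor_divide_upper)
      then show "0 \<le> \<sigma> + of_int k * (2*pi)" "\<sigma> + of_int k * (2*pi) \<le> 2 * pi"
        unfolding k_def by (simp_all add: algebra_simps)
    qed
    have "p + (of_int j * (2*pi), of_int k * (2*pi)) \<in> Pbox"
      using in1 in2 unfolding p Pbox_def by simp
    with elim[rule_format, of "(j, k)"] show ?case by simp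
  qed
qed

lemma si_iff:
  fixes f :: "'a::euclidean_space \<Rightarrow> real"
  assumes [measurable]: "A \<in> sets borel" "f \<in> borel_measurable borel" and nn: "\<And>x. f x \<ge> 0"
  shows "set_integrable lborel A f \<longleftrightarrow> (\<integral>\<^sup>+ x. indicator A x * ennreal (f x) \<partial>lborel) < \<infinity>"
proof -
  have "(\<integral>\<^sup>+ x. ennreal (norm (indicator A x *\<^sub>R f x)) \<partial>lborel) = (\<integral>\<^sup>+ x. indicator A x * ennreal (f x) \<partial>lborel)"
    by (intro nn_integral_cong) (auto simp: indicator_def nn)
  then show ?thesis unfolding set_integrable_def integrable_iff_bounded by simp
qed

lemma sli_eq:
  fixes f :: "'a::euclidean_space \<Rightarrow> real"
  assumes [measurable]: "A \<in> sets borel" "f \<in> borel_measurable borel" and nn: "\<And>x. f x \<ge> 0"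
  shows "set_lebesgue_integral lborel A f = enn2real (\<integral>\<^sup>+ x. indicator A x * ennreal (f x) \<partial>lborel)"
proof -
  have "set_lebesgue_integral lborel A f = enn2real (\<integral>\<^sup>+ x. ennreal (indicator A x *\<^sub>R f x) \<partial>lborel)"
    unfolding set_lebesgue_integral_def by (rule integral_eq_nn_integral) (auto simp: nn)
  also have "(\<integral>\<^sup>+ x. ennreal (indicator A x *\<^sub>R f x) \<partial>lborel) = (\<integral>\<^sup>+ x. indicator A x * ennreal (f x) \<partial>lborel)"
    by (intro nn_integral_cong) (auto simp: indicator_def)
  finally show ?thesis .
qed


locale gen =
  fixes a b N ka kb kn m1 m2 m3 :: int and e \<alpha> \<beta> L :: real
  assumes N1: "N \<ge> 1" and a0: "a \<noteq> 0" and \<beta>0: "\<beta> \<noteq> 0" and L0: "L > 0" and e1: "e * e = 1"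
    and hab: "of_int a * \<alpha> + of_int b * \<beta> = 0"
    and h\<alpha>: "2 * pi * \<alpha> = of_int (2 * ka + 1) * L"
    and h\<beta>: "2 * pi * \<beta> = of_int (2 * kb + 1) * L"
    and hN: "4 * pi * \<beta> / of_int N = of_int (2 * kn) * L"
    and hB: "L = of_int m1 * (2 * pi * \<alpha>) + of_int m2 * (2 * pi * \<beta>) + of_int m3 * (4 * pi * \<beta> / of_int N)"
    and hodd: "odd (m1 + m2)"
begin

definition FF :: "(real \<Rightarrow> real) \<Rightarrow> real \<times> real \<Rightarrow> real" where
  "FF \<Theta> = (\<lambda>(\<rho>, \<sigma>). e * vsig (\<rho> / 2) * vsig (\<sigma> / 2) * \<Theta> (\<alpha> * \<rho> + \<beta> * \<sigma>))"

definition anti :: "(real \<Rightarrow> real) \<Rightarrow> bool" where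
  "anti \<Theta> \<longleftrightarrow> (\<forall>u. \<Theta> (u + L) = - \<Theta> u)"

definition C :: real where "C = 2 * pi * (of_int \<bar>2 * kb + 1\<bar> / \<bar>\<beta>\<bar>)"

lemma C_pos: "C > 0"
proof -
  have "2 * kb + 1 \<noteq> 0" by presburger
  hence "(of_int \<bar>2 * kb + 1\<bar> :: real) > 0" by simp
  thus ?thesis unfolding C_def using \<beta>0 by simp
qed

lemma e_ne: "e \<noteq> 0" using e1 by auto

lemma FF_apply: "FF \<Theta> (\<rho>, \<sigma>) = e * vsig (\<rho> / 2) * vsig (\<sigma> / 2) * \<Theta> (\<alpha> * \<rho> + \<beta> * \<sigma>)"
  by (simp add: FF_def)

lemma anti_odd: "anti \<Theta> \<Longrightarrow> \<Theta> (u + of_int (2 * k + 1) * L) = - \<Theta> u"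
  unfolding anti_def using anti_int[of \<Theta> L u "2 * k + 1"] by (simp add: sgi_def)

lemma anti_even: "anti \<Theta> \<Longrightarrow> \<Theta> (u + of_int (2 * k) * L) = \<Theta> u"
  unfolding anti_def using anti_int[of \<Theta> L u "2 * k"] by (simp add: sgi_def)

lemma FF_per: "anti \<Theta> \<Longrightarrow> per2 (FF \<Theta>)"
  unfolding per2_def
proof (intro allI conjI)
  fix \<rho> \<sigma> assume A: "anti \<Theta>"
  have "(\<rho> + 2 * pi) / 2 = \<rho> / 2 + pi" "(\<sigma> + 2 * pi) / 2 = \<sigma> / 2 + pi" by simp_all
  moreover have "\<alpha> * (\<rho> + 2 * pi) + \<beta> * \<sigma> = (\<alpha> * \<rho> + \<beta> * \<sigma>) + of_int (2 * ka + 1) * L"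
    using h\<alpha> by (simp add: algebra_simps)
  moreover have "\<alpha> * \<rho> + \<beta> * (\<sigma> + 2 * pi) = (\<alpha> * \<rho> + \<beta> * \<sigma>) + of_int (2 * kb + 1) * L"
    using h\<beta> by (simp add: algebra_simps)
  ultimately show "FF \<Theta> (\<rho> + 2 * pi, \<sigma>) = FF \<Theta> (\<rho>, \<sigma>)" "FF \<Theta> (\<rho>, \<sigma> + 2 * pi) = FF \<Theta> (\<rho>, \<sigma>)"
    unfolding FF_apply by (simp_all only: vsig_pi anti_odd[OF A])
qed

lemma FF_meas:
  assumes [measurable]: "\<Theta> \<in> borel_measurable borel"
  shows "FF \<Theta> \<in> borel_measurable borel"
proof -
  have "FF \<Theta> \<in> borel_measurable (borel \<Otimes>\<^sub>M borel)"
    unfolding FF_def by measurable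
  then show ?thesis by (simp only: borel_prod)
qed

lemma FF_meas_lborel:
  assumes "\<Theta> \<in> borel_measurable borel"
  shows "FF \<Theta> \<in> borel_measurable lborel"
  using FF_meas[OF assms] by simp

lemma AE_sines: "AE p in (lborel :: (real \<times> real) measure). sin (fst p / 2 + c) \<noteq> 0 \<and> sin (snd p / 2 + d) \<noteq> 0"
  using AE_lift_fst[OF AE_sin_ne[of c]] AE_lift_snd[OF AE_sin_ne[of d]] by eventually_elim simp

lemma FF_sq_AE: "AE p in lborel. (FF \<Theta> p)^2 = (\<Theta> (\<alpha> * fst p + \<beta> * snd p))^2"
  using AE_sines[of 0 0]
proof eventually_elim
  case (elim p)
  obtain \<rho> \<sigma> where p: "p = (\<rho>, \<sigma>)" by (cases p)
  have "(FF \<Theta> p)^2 = (e * e) * (vsig (\<rho>/2) * vsig (\<rho>/2)) * (vsig (\<sigma>/2) * vsig (\<sigma>/2)) * (\<Theta> (\<alpha> * \<rho> + \<beta> * \<sigma>))^2"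
    unfolding p FF_apply by (simp add: power2_eq_square mult_ac)
  also have "\<dots> = (\<Theta> (\<alpha> * \<rho> + \<beta> * \<sigma>))^2"
    using elim unfolding p by (simp add: vsig_sq e1)
  finally show ?case unfolding p by simp
qed

lemma FF_nn:
  assumes A: "anti \<Theta>" and [measurable]: "\<Theta> \<in> borel_measurable borel"
  shows "(\<integral>\<^sup>+ p. indicator Pbox p * ennreal ((FF \<Theta> p)^2) \<partial>lborel) = ennreal C * IS (\<lambda>u. (\<Theta> u)^2) {0..<L}"
proof -
  have "(\<integral>\<^sup>+ p. indicator Pbox p * ennreal ((FF \<Theta> p)^2) \<partial>lborel)
      = (\<integral>\<^sup>+ p. indicator Pbox p * ennreal ((\<lambda>u. (\<Theta> u)^2) (\<alpha> * fst p + \<beta> * snd p)) \<partial>lborel)"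
    by (rule nn_integral_cong_AE) (use FF_sq_AE[of \<Theta>] in \<open>eventually_elim, simp\<close>)
  also have "\<dots> = ennreal C * IS (\<lambda>u. (\<Theta> u)^2) {0..<L}"
    unfolding C_def
    by (rule box_int) (use A L0 \<beta>0 h\<beta> in \<open>auto simp: anti_def\<close>)
  finally show ?thesis .
qed

end


context gen begin

lemma Pbox_borel[measurable]: "Pbox \<in> sets borel"
  using Pbox_sets by (simp only: borel_prod)

lemma FF_sq_meas:
  assumes "\<Theta> \<in> borel_measurable borel"
  shows "(\<lambda>p. (FF \<Theta> p)^2) \<in> borel_measurable borel"
  using FF_meas[OF assms] by measurable

lemma FF_L2P:
  assumes A: "anti \<Theta>" and M[measurable]: "\<Theta> \<in> borel_measurable borel"
    and I: "set_integrable lborel {0..L} (\<lambda>u. (\<Theta> u)^2)"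
  shows "L2P (FF \<Theta>)"
proof -
  have "(\<integral>\<^sup>+ u. indicator {0..L} u * ennreal ((\<Theta> u)^2) \<partial>lborel) < \<infinity>"
    using I si_iff[of "{0..L}" "\<lambda>u. (\<Theta> u)^2"] by simp
  hence "IS (\<lambda>u. (\<Theta> u)^2) {0..<L} < \<infinity>" using IS_closed unfolding IS_def by metis
  hence "(\<integral>\<^sup>+ p. indicator Pbox p * ennreal ((FF \<Theta> p)^2) \<partial>lborel) < \<infinity>"
    unfolding FF_nn[OF A M] by (simp add: ennreal_mult_less_top)
  hence "set_integrable lborel Pbox (\<lambda>p. (FF \<Theta> p)^2)"
    using si_iff[OF Pbox_borel FF_sq_meas[OF M]] by simp
  moreover have "per2 (FF \<Theta>)" by (rule FF_per[OF A])
  ultimately show ?thesis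
    unfolding L2P_def per2_def using FF_meas_lborel[OF M] by blast
qed

lemma FF_int:
  assumes A: "anti \<Theta>" and M[measurable]: "\<Theta> \<in> borel_measurable borel"
  shows "set_lebesgue_integral lborel Pbox (\<lambda>p. (FF \<Theta> p)^2)
       = C * set_lebesgue_integral lborel {0..L} (\<lambda>u. (\<Theta> u)^2)"
proof -
  have "set_lebesgue_integral lborel Pbox (\<lambda>p. (FF \<Theta> p)^2)
      = enn2real (\<integral>\<^sup>+ p. indicator Pbox p * ennreal ((FF \<Theta> p)^2) \<partial>lborel)"
    by (rule sli_eq[OF Pbox_borel FF_sq_meas[OF M]]) simp
  also have "\<dots> = C * enn2real (IS (\<lambda>u. (\<Theta> u)^2) {0..<L})"
    unfolding FF_nn[OF A M] using C_pos by (simp add: enn2real_mult)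
  also have "IS (\<lambda>u. (\<Theta> u)^2) {0..<L} = (\<integral>\<^sup>+ u. indicator {0..L} u * ennreal ((\<Theta> u)^2) \<partial>lborel)"
    using IS_closed unfolding IS_def by metis
  also have "enn2real \<dots> = set_lebesgue_integral lborel {0..L} (\<lambda>u. (\<Theta> u)^2)"
    by (rule sli_eq[symmetric]) auto
  finally show ?thesis .
qed

lemma H_shift:
  assumes "i \<in> {0..N-1}"
  shows "2 * \<alpha> * (of_int a * \<theta>) + 2 * \<beta> * (of_int b * \<theta> + 2 * pi * of_int i / of_int N) = of_int (2 * (kn * i)) * L"
proof -
  have "2 * \<alpha> * (of_int a * \<theta>) + 2 * \<beta> * (of_int b * \<theta> + 2 * pi * of_int i / of_int N)
     = 2 * \<theta> * (of_int a * \<alpha> + of_int b * \<beta>) + of_int i * (4 * pi * \<beta> / of_int N)"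
    by (simp add: algebra_simps)
  also have "\<dots> = of_int (2 * (kn * i)) * L" unfolding hab hN by simp
  finally show ?thesis .
qed

lemma FF_fixed:
  assumes A: "anti \<Theta>"
  shows "fixed_by (H N a b) (FF \<Theta>)"
  unfolding fixed_by_def
proof
  fix s assume "s \<in> H N a b"
  then obtain \<theta> i where s: "s = (Rot (of_int a * \<theta>), Rot (of_int b * \<theta> + 2 * pi * of_int i / of_int N))"
    and i: "i \<in> {0..N-1}" unfolding H_def by blast
  define u where "u = of_int a * \<theta>"
  define w where "w = of_int b * \<theta> + 2 * pi * of_int i / of_int N"
  show "AE p in lborel. p \<in> Pbox \<longrightarrow> Tp s (FF \<Theta>) p = FF \<Theta> p"
    using AE_sines[of 0 0] AE_sines[of u w]
  proof eventually_elim
    case (elim p)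
    obtain \<rho> \<sigma> where p: "p = (\<rho>, \<sigma>)" by (cases p)
    have s1: "sin (\<rho>/2) \<noteq> 0" "sin (\<sigma>/2) \<noteq> 0" "sin (\<rho>/2 + u) \<noteq> 0" "sin (\<sigma>/2 + w) \<noteq> 0"
      using elim unfolding p by auto
    have "Tp s (FF \<Theta>) p = vsig (\<rho>/2 + u) * vsig (\<rho>/2) * vsig (\<sigma>/2 + w) * vsig (\<sigma>/2) * FF \<Theta> (\<rho> + 2*u, \<sigma> + 2*w)"
      unfolding s p u_def[symmetric] w_def[symmetric] by (rule Tp_Rot[OF FF_per[OF A] s1])
    also have "FF \<Theta> (\<rho> + 2*u, \<sigma> + 2*w) = e * vsig (\<rho>/2 + u) * vsig (\<sigma>/2 + w) * \<Theta> (\<alpha> * \<rho> + \<beta> * \<sigma>)"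
    proof -
      have "\<alpha> * (\<rho> + 2*u) + \<beta> * (\<sigma> + 2*w) = (\<alpha> * \<rho> + \<beta> * \<sigma>) + (2 * \<alpha> * u + 2 * \<beta> * w)"
        by (simp add: algebra_simps)
      also have "2 * \<alpha> * u + 2 * \<beta> * w = of_int (2 * (kn * i)) * L"
        unfolding u_def w_def by (rule H_shift[OF i])
      finally have "\<Theta> (\<alpha> * (\<rho> + 2*u) + \<beta> * (\<sigma> + 2*w)) = \<Theta> (\<alpha> * \<rho> + \<beta> * \<sigma>)"
        using anti_even[OF A, of "\<alpha> * \<rho> + \<beta> * \<sigma>" "kn * i"] by (simp only:)
      moreover have "(\<rho> + 2*u) / 2 = \<rho>/2 + u" "(\<sigma> + 2*w) / 2 = \<sigma>/2 + w" by simp_all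
      ultimately show ?thesis unfolding FF_apply by (simp only:)
    qed
    also have "vsig (\<rho>/2 + u) * vsig (\<rho>/2) * vsig (\<sigma>/2 + w) * vsig (\<sigma>/2) * (e * vsig (\<rho>/2 + u) * vsig (\<sigma>/2 + w) * \<Theta> (\<alpha> * \<rho> + \<beta> * \<sigma>))
      = (e * vsig (\<rho>/2) * vsig (\<sigma>/2) * \<Theta> (\<alpha> * \<rho> + \<beta> * \<sigma>)) * ((vsig (\<rho>/2 + u) * vsig (\<rho>/2 + u)) * (vsig (\<sigma>/2 + w) * vsig (\<sigma>/2 + w)))"
      by (simp add: mult_ac)
    also have "\<dots> = FF \<Theta> p" unfolding p FF_apply using s1 by (simp add: vsig_sq)
    finally show ?case by simp
  qed
qed

end


lemma vsig_pi2: "vsig ((x + 2 * pi) / 2) = - vsig (x / 2)"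
proof -
  have "(x + 2 * pi) / 2 = x / 2 + pi" by simp
  then show ?thesis by (simp only: vsig_pi)
qed

context gen begin

lemma char_dir:
  assumes L2: "L2P \<phi>" and fx: "fixed_by (H N a b) \<phi>"
  shows "\<exists>\<Theta>. admissible L \<Theta> \<and> (AE p in lborel. p \<in> Pbox \<longrightarrow> \<phi> p = FF \<Theta> p)"
proof -
  have \<phi>m[measurable]: "\<phi> \<in> borel_measurable borel" using L2 unfolding L2P_def by simp
  have \<phi>per: "per2 \<phi>" using L2 unfolding L2P_def per2_def by blast
  have \<phi>int: "set_integrable lborel Pbox (\<lambda>p. (\<phi> p)^2)" using L2 unfolding L2P_def by blast
  define \<psi> where "\<psi> p = e * vsig (fst p / 2) * vsig (snd p / 2) * \<phi> p" for p
  have \<psi>m[measurable]: "\<psi> \<in> borel_measurable borel"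
  proof -
    have [measurable]: "\<phi> \<in> borel_measurable (borel \<Otimes>\<^sub>M borel)" using \<phi>m by (simp only: borel_prod)
    have "\<psi> \<in> borel_measurable (borel \<Otimes>\<^sub>M borel)" unfolding \<psi>_def by measurable
    then show ?thesis by (simp only: borel_prod)
  qed
  have \<psi>1: "\<psi> (\<rho> + 2*pi, \<sigma>) = - \<psi> (\<rho>, \<sigma>)" for \<rho> \<sigma>
  proof -
    show ?thesis unfolding \<psi>_def using \<phi>per unfolding per2_def by (simp add: vsig_pi2)
  qed
  have \<psi>2: "\<psi> (\<rho>, \<sigma> + 2*pi) = - \<psi> (\<rho>, \<sigma>)" for \<rho> \<sigma>
  proof -
    show ?thesis unfolding \<psi>_def using \<phi>per unfolding per2_def by (simp add: vsig_pi2)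
  qed
  have \<phi>\<psi>: "\<phi> (\<rho>, \<sigma>) = e * vsig (\<rho>/2) * vsig (\<sigma>/2) * \<psi> (\<rho>, \<sigma>)" if "sin (\<rho>/2) \<noteq> 0" "sin (\<sigma>/2) \<noteq> 0" for \<rho> \<sigma>
  proof -
    have "e * vsig (\<rho>/2) * vsig (\<sigma>/2) * \<psi> (\<rho>, \<sigma>) = (e * e) * (vsig (\<rho>/2) * vsig (\<rho>/2)) * (vsig (\<sigma>/2) * vsig (\<sigma>/2)) * \<phi> (\<rho>, \<sigma>)"
      unfolding \<psi>_def by (simp add: mult_ac)
    also have "\<dots> = \<phi> (\<rho>, \<sigma>)" using that by (simp add: e1 vsig_sq)
    finally show ?thesis by simp
  qed
  have shiftAE: "AE p in lborel. \<psi> (fst p + 2 * (of_int a * \<theta>), snd p + 2 * (of_int b * \<theta> + 2 * pi * of_int i / of_int N)) = \<psi> p"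
    if i: "i \<in> {0..N-1}" for \<theta> i
  proof -
    define u where "u = of_int a * \<theta>"
    define w where "w = of_int b * \<theta> + 2 * pi * of_int i / of_int N"
    have sH: "(Rot u, Rot w) \<in> H N a b" unfolding H_def u_def w_def using i by blast
    have A1: "AE p in lborel. p \<in> Pbox \<longrightarrow> \<psi> (fst p + 2 * u, snd p + 2 * w) = \<psi> p"
      using fx[unfolded fixed_by_def, rule_format, OF sH] AE_sines[of 0 0] AE_sines[of u w]
    proof eventually_elim
      case (elim p)
      obtain \<rho> \<sigma> where p: "p = (\<rho>, \<sigma>)" by (cases p)
      have s1: "sin (\<rho>/2) \<noteq> 0" "sin (\<sigma>/2) \<noteq> 0" "sin (\<rho>/2 + u) \<noteq> 0" "sin (\<sigma>/2 + w) \<noteq> 0"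
        using elim unfolding p by auto
      have s2: "sin ((\<rho> + 2*u)/2) \<noteq> 0" "sin ((\<sigma> + 2*w)/2) \<noteq> 0" using s1 by (simp_all add: add_divide_distrib)
      have hh: "(\<rho> + 2*u)/2 = \<rho>/2 + u" "(\<sigma> + 2*w)/2 = \<sigma>/2 + w" by simp_all
      have "Tp (Rot u, Rot w) \<phi> p = vsig (\<rho>/2 + u) * vsig (\<rho>/2) * vsig (\<sigma>/2 + w) * vsig (\<sigma>/2) * \<phi> (\<rho> + 2*u, \<sigma> + 2*w)"
        unfolding p by (rule Tp_Rot[OF \<phi>per s1])
      also have "\<phi> (\<rho> + 2*u, \<sigma> + 2*w) = e * vsig (\<rho>/2 + u) * vsig (\<sigma>/2 + w) * \<psi> (\<rho> + 2*u, \<sigma> + 2*w)"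
        using \<phi>\<psi>[OF s2] unfolding hh .
      also have "vsig (\<rho>/2 + u) * vsig (\<rho>/2) * vsig (\<sigma>/2 + w) * vsig (\<sigma>/2) * (e * vsig (\<rho>/2 + u) * vsig (\<sigma>/2 + w) * \<psi> (\<rho> + 2*u, \<sigma> + 2*w))
        = (e * vsig (\<rho>/2) * vsig (\<sigma>/2) * \<psi> (\<rho> + 2*u, \<sigma> + 2*w)) * ((vsig (\<rho>/2 + u) * vsig (\<rho>/2 + u)) * (vsig (\<sigma>/2 + w) * vsig (\<sigma>/2 + w)))"
        by (simp add: mult_ac)
      also have "\<dots> = e * vsig (\<rho>/2) * vsig (\<sigma>/2) * \<psi> (\<rho> + 2*u, \<sigma> + 2*w)" using s1 by (simp add: vsig_sq)
      finally have T: "Tp (Rot u, Rot w) \<phi> p = e * vsig (\<rho>/2) * vsig (\<sigma>/2) * \<psi> (\<rho> + 2*u, \<sigma> + 2*w)" .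
      have nz: "e * vsig (\<rho>/2) * vsig (\<sigma>/2) \<noteq> 0" using s1 e_ne by (simp add: vsig_def sgn_eq_0_iff)
      show ?case
      proof
        assume "p \<in> Pbox"
        with elim have "Tp (Rot u, Rot w) \<phi> p = \<phi> p" by simp
        hence "e * vsig (\<rho>/2) * vsig (\<sigma>/2) * \<psi> (\<rho> + 2*u, \<sigma> + 2*w) = e * vsig (\<rho>/2) * vsig (\<sigma>/2) * \<psi> (\<rho>, \<sigma>)"
          unfolding T using \<phi>\<psi>[OF s1(1,2)] p by simp
        with nz show "\<psi> (fst p + 2 * u, snd p + 2 * w) = \<psi> p" unfolding p by simp
      qed
    qed
    have "per2 (\<lambda>p. \<psi> (fst p + 2 * u, snd p + 2 * w) = \<psi> p)"
      unfolding per2_def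
    proof (intro allI conjI)
      fix \<rho> \<sigma> :: real
      have "\<rho> + 2 * pi + 2 * u = (\<rho> + 2 * u) + 2 * pi" "\<sigma> + 2 * pi + 2 * w = (\<sigma> + 2 * w) + 2 * pi" by simp_all
      then show "(\<psi> (fst (\<rho> + 2 * pi, \<sigma>) + 2 * u, snd (\<rho> + 2 * pi, \<sigma>) + 2 * w) = \<psi> (\<rho> + 2 * pi, \<sigma>))
           = (\<psi> (fst (\<rho>, \<sigma>) + 2 * u, snd (\<rho>, \<sigma>) + 2 * w) = \<psi> (\<rho>, \<sigma>))"
        "(\<psi> (fst (\<rho>, \<sigma> + 2 * pi) + 2 * u, snd (\<rho>, \<sigma> + 2 * pi) + 2 * w) = \<psi> (\<rho>, \<sigma> + 2 * pi))
           = (\<psi> (fst (\<rho>, \<sigma>) + 2 * u, snd (\<rho>, \<sigma>) + 2 * w) = \<psi> (\<rho>, \<sigma>))"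
        by (simp_all only: fst_conv snd_conv \<psi>1 \<psi>2 neg_equal_iff_equal)
    qed
    from ext_R2[OF this A1] show ?thesis unfolding u_def w_def by simp
  qed
  \<comment> \<open>Step C: pass to coordinates (x, u) with u = alpha x + beta sigma\<close>
  define g where "g q = \<psi> (fst q, (snd q - \<alpha> * fst q) / \<beta>)" for q
  have gm: "g \<in> borel_measurable borel"
  proof -
    have [measurable]: "\<psi> \<in> borel_measurable (borel \<Otimes>\<^sub>M borel)" using \<psi>m by (simp only: borel_prod)
    have "g \<in> borel_measurable (borel \<Otimes>\<^sub>M borel)" unfolding g_def by measurable
    then show ?thesis by (simp only: borel_prod)
  qed
  have ginv: "AE q in lborel. g (fst q + s, snd q) = g q" for s
  proof -
    define \<theta> where "\<theta> = s / (2 * of_int a)"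
    have i0: "(0::int) \<in> {0..N-1}" using N1 by simp
    have s2: "2 * (of_int a * \<theta>) = s" unfolding \<theta>_def using a0 by simp
    from shiftAE[OF i0, of \<theta>] have "AE p in lborel. \<psi> (fst p + s, snd p + 2 * (of_int b * \<theta>)) = \<psi> p"
      by (simp add: s2)
    from AE_shear[OF _ this, of "1 / \<beta>" "- \<alpha> / \<beta>"] \<beta>0
    have "AE q in lborel. \<psi> (fst q + s, 1 / \<beta> * snd q + - \<alpha> / \<beta> * fst q + 2 * (of_int b * \<theta>))
                        = \<psi> (fst q, 1 / \<beta> * snd q + - \<alpha> / \<beta> * fst q)" by simp
    moreover have k1: "(y - \<alpha> * (x + s)) / \<beta> = 1 / \<beta> * y + - \<alpha> / \<beta> * x + 2 * (of_int b * \<theta>)" for x y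
    proof -
      have "- \<alpha> * s / \<beta> = 2 * (of_int b * \<theta>)"
      proof -
        have "of_int a * \<alpha> = - (of_int b * \<beta>)" using hab by simp
        hence "- (of_int a * \<alpha>) * s = of_int b * \<beta> * s" by simp
        hence "- \<alpha> * s * of_int a = of_int b * \<beta> * s" by (simp add: mult_ac)
        thus ?thesis unfolding \<theta>_def using a0 \<beta>0 by (simp add: field_simps)
      qed
      then show ?thesis using \<beta>0 by (simp add: field_simps)
    qed
    moreover have k2: "(y - \<alpha> * x) / \<beta> = 1 / \<beta> * y + - \<alpha> / \<beta> * x" for x y
      using \<beta>0 by (simp add: field_simps)
    ultimately show ?thesis unfolding g_def
    proof (elim eventually_mono)
      fix q :: "real \<times> real"
      assume "\<psi> (fst q + s, 1 / \<beta> * snd q + - \<alpha> / \<beta> * fst q + 2 * (of_int b * \<theta>))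
                        = \<psi> (fst q, 1 / \<beta> * snd q + - \<alpha> / \<beta> * fst q)"
      then show "\<psi> (fst (fst q + s, snd q), (snd (fst q + s, snd q) - \<alpha> * fst (fst q + s, snd q)) / \<beta>) =
          \<psi> (fst q, (snd q - \<alpha> * fst q) / \<beta>)"
        by (simp only: fst_conv snd_conv k1) (simp only: k2)
    qed
  qed
  obtain h where hm[measurable]: "h \<in> borel_measurable borel" and hg: "AE q in lborel. g q = h (snd q)"
    using inv_fun[OF gm ginv] by blast
  have hD: "AE p in lborel. \<psi> p = h (\<alpha> * fst p + \<beta> * snd p)"
  proof -
    from AE_shear[OF \<beta>0 hg, of \<alpha>]
    have "AE p in lborel. g (fst p, \<beta> * snd p + \<alpha> * fst p) = h (\<beta> * snd p + \<alpha> * fst p)" by simp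
    moreover have "g (x, \<beta> * y + \<alpha> * x) = \<psi> (x, y)" for x y unfolding g_def using \<beta>0 by simp
    ultimately show ?thesis by (simp add: add.commute)
  qed
  have Rset: "{u. h (u + d) = c * h u} \<in> sets borel" for c d
  proof -
    have "{u \<in> space borel. h (u + d) = c * h u} \<in> sets borel" by measurable
    thus ?thesis by simp
  qed
  have E1: "AE u in lborel. h (u + 2 * pi * \<beta>) = - 1 * h u"
  proof (rule AE_unlin[OF \<beta>0 Rset, of \<alpha>])
    show "AE p in lborel. h (\<alpha> * fst p + \<beta> * snd p + 2 * pi * \<beta>) = - 1 * h (\<alpha> * fst p + \<beta> * snd p)"
      using hD AE_translate[OF hD, of "(0, 2 * pi)"]
    proof eventually_elim
      case (elim p)
      have "\<psi> (p + (0, 2 * pi)) = - \<psi> p" using \<psi>2[of "fst p" "snd p"] by (cases p) simp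
      with elim show ?case by (simp add: algebra_simps)
    qed
  qed
  have E2: "AE u in lborel. h (u + 2 * pi * \<alpha>) = - 1 * h u"
  proof (rule AE_unlin[OF \<beta>0 Rset, of \<alpha>])
    show "AE p in lborel. h (\<alpha> * fst p + \<beta> * snd p + 2 * pi * \<alpha>) = - 1 * h (\<alpha> * fst p + \<beta> * snd p)"
      using hD AE_translate[OF hD, of "(2 * pi, 0)"]
    proof eventually_elim
      case (elim p)
      have "\<psi> (p + (2 * pi, 0)) = - \<psi> p" using \<psi>1[of "fst p" "snd p"] by (cases p) simp
      with elim show ?case by (simp add: algebra_simps)
    qed
  qed
  have E3: "AE u in lborel. h (u + 4 * pi * \<beta> / of_int N) = 1 * h u"
  proof (cases "N = 1")
    case True
    have "AE u in lborel. h (u + (2 * pi * \<beta> + 2 * pi * \<beta>)) = - 1 * - 1 * h u" by (rule shift_comb[OF E1 E1])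
    then show ?thesis using True by (simp add: algebra_simps)
  next
    case False
    hence i1: "(1::int) \<in> {0..N-1}" using N1 by simp
    have S: "AE p in lborel. \<psi> (fst p, snd p + 4 * pi / of_int N) = \<psi> p"
      using shiftAE[OF i1, of 0] by simp
    show ?thesis
    proof (rule AE_unlin[OF \<beta>0 Rset, of \<alpha>])
      show "AE p in lborel. h (\<alpha> * fst p + \<beta> * snd p + 4 * pi * \<beta> / of_int N) = 1 * h (\<alpha> * fst p + \<beta> * snd p)"
        using hD AE_translate[OF hD, of "(0, 4 * pi / of_int N)"] S
      proof eventually_elim
        case (elim p)
        then show ?case by (cases p) (simp add: algebra_simps)
      qed
    qed
  qed
  have F1: "AE u in lborel. h (u + of_int m1 * (2 * pi * \<alpha>)) = sgi (1 * m1) * h u"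
    by (rule shift_int) (use E2 in simp)
  have F2: "AE u in lborel. h (u + of_int m2 * (2 * pi * \<beta>)) = sgi (1 * m2) * h u"
    by (rule shift_int) (use E1 in simp)
  have F3: "AE u in lborel. h (u + of_int m3 * (4 * pi * \<beta> / of_int N)) = sgi (0 * m3) * h u"
    by (rule shift_int) (use E3 in \<open>simp add: sgi_def\<close>)
  have "AE u in lborel. h (u + (of_int m1 * (2 * pi * \<alpha>) + (of_int m2 * (2 * pi * \<beta>) + of_int m3 * (4 * pi * \<beta> / of_int N))))
      = sgi (1 * m1) * (sgi (1 * m2) * sgi (0 * m3)) * h u"
    by (rule shift_comb[OF F1 shift_comb[OF F2 F3]])
  moreover have "sgi (1 * m1) * (sgi (1 * m2) * sgi (0 * m3)) = -1"
    using hodd by (simp add: sgi_def)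
  ultimately have hanti: "AE u in lborel. h (u + L) = - h u"
    by (simp add: hB add.assoc)
  define \<Theta> where "\<Theta> = ext L h"
  have \<Theta>m[measurable]: "\<Theta> \<in> borel_measurable borel" unfolding \<Theta>_def by simp
  have \<Theta>a: "anti \<Theta>" unfolding anti_def \<Theta>_def using ext_anti[OF L0] by simp
  have \<Theta>h: "AE u in lborel. \<Theta> u = h u" unfolding \<Theta>_def by (rule ext_AE[OF L0 hanti])
  have eqAE: "AE p in lborel. \<phi> p = FF \<Theta> p"
    using AE_sines[of 0 0] hD AE_lin[OF \<beta>0 \<Theta>h, of \<alpha>]
  proof eventually_elim
    case (elim p)
    obtain \<rho> \<sigma> where p: "p = (\<rho>, \<sigma>)" by (cases p)
    show ?case using elim \<phi>\<psi>[of \<rho> \<sigma>] unfolding p FF_apply by simp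
  qed
  have "(\<integral>\<^sup>+ p. indicator Pbox p * ennreal ((\<phi> p)^2) \<partial>lborel) < \<infinity>"
    using \<phi>int si_iff[OF Pbox_borel, of "\<lambda>p. (\<phi> p)^2"] by simp
  moreover have "(\<integral>\<^sup>+ p. indicator Pbox p * ennreal ((\<phi> p)^2) \<partial>lborel) = ennreal C * IS (\<lambda>u. (\<Theta> u)^2) {0..<L}"
    unfolding FF_nn[OF \<Theta>a \<Theta>m, symmetric]
    by (rule nn_integral_cong_AE) (use eqAE in \<open>eventually_elim, simp\<close>)
  ultimately have "IS (\<lambda>u. (\<Theta> u)^2) {0..<L} < \<infinity>"
    using C_pos by (auto simp: ennreal_mult_less_top)
  hence "(\<integral>\<^sup>+ u. indicator {0..L} u * ennreal ((\<Theta> u)^2) \<partial>lborel) < \<infinity>"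
    using IS_closed unfolding IS_def by metis
  hence "set_integrable lborel {0..L} (\<lambda>u. (\<Theta> u)^2)"
    using si_iff[of "{0..L}" "\<lambda>u. (\<Theta> u)^2"] by simp
  hence "admissible L \<Theta>"
    unfolding admissible_def using \<Theta>a unfolding anti_def by simp
  moreover have "AE p in lborel. p \<in> Pbox \<longrightarrow> \<phi> p = FF \<Theta> p" using eqAE by eventually_elim simp
  ultimately show ?thesis by blast
qed

end


context gen begin

lemma adm_anti: "admissible L \<Theta> \<Longrightarrow> anti \<Theta>"
  unfolding admissible_def anti_def by simp

lemma adm_meas: "admissible L \<Theta> \<Longrightarrow> \<Theta> \<in> borel_measurable borel"
  unfolding admissible_def by simp

lemma adm_int: "admissible L \<Theta> \<Longrightarrow> set_integrable lborel {0..L} (\<lambda>u. (\<Theta> u)^2)"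
  unfolding admissible_def by simp

lemma nonzero:
  "\<exists>\<phi>. L2P \<phi> \<and> fixed_by (H N a b) \<phi> \<and> \<not> (AE p in lborel. p \<in> Pbox \<longrightarrow> \<phi> p = 0)"
proof -
  define \<Theta> where "\<Theta> = ext L (\<lambda>_. 1)"
  have \<Theta>m[measurable]: "\<Theta> \<in> borel_measurable borel" unfolding \<Theta>_def by simp
  have \<Theta>a: "anti \<Theta>" unfolding anti_def \<Theta>_def using ext_anti[OF L0] by simp
  have sq: "(\<Theta> u)^2 = 1" for u unfolding \<Theta>_def ext_def by (simp add: sgi_def)
  have "(\<integral>\<^sup>+ u. indicator {0..L} u * ennreal ((\<Theta> u)^2) \<partial>lborel) = ennreal L"
    using L0 by (simp add: sq)
  hence I: "set_integrable lborel {0..L} (\<lambda>u. (\<Theta> u)^2)"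
    using si_iff[of "{0..L}" "\<lambda>u. (\<Theta> u)^2"] by simp
  have IS: "IS (\<lambda>u. (\<Theta> u)^2) {0..<L} = ennreal L"
    unfolding IS_def using L0 by (simp add: sq)
  have "\<not> (AE p in lborel. p \<in> Pbox \<longrightarrow> FF \<Theta> p = 0)"
  proof
    assume Z: "AE p in lborel. p \<in> Pbox \<longrightarrow> FF \<Theta> p = 0"
    have "(\<integral>\<^sup>+ p. indicator Pbox p * ennreal ((FF \<Theta> p)^2) \<partial>lborel) = (\<integral>\<^sup>+ p. 0 \<partial>(lborel :: (real \<times> real) measure))"
      by (rule nn_integral_cong_AE) (use Z in \<open>eventually_elim, auto simp: indicator_def\<close>)
    hence "ennreal C * ennreal L = 0" unfolding FF_nn[OF \<Theta>a \<Theta>m] IS by simp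
    thus False using C_pos L0 by (simp add: ennreal_mult[symmetric])
  qed
  then show ?thesis using FF_L2P[OF \<Theta>a \<Theta>m I] FF_fixed[OF \<Theta>a] by blast
qed

lemma surj:
  assumes fm: "f \<in> borel_measurable lborel" and fi: "set_integrable lborel {0..L} (\<lambda>u. (f u)^2)"
  shows "\<exists>\<Theta>. admissible L \<Theta> \<and> (AE u in lborel. u \<in> {0..L} \<longrightarrow> \<Theta> u = f u)"
proof -
  have fm'[measurable]: "f \<in> borel_measurable borel" using fm by simp
  define \<Theta> where "\<Theta> = ext L f"
  have \<Theta>m[measurable]: "\<Theta> \<in> borel_measurable borel" unfolding \<Theta>_def by simp
  have \<Theta>a: "\<forall>u. \<Theta> (u + L) = - \<Theta> u" unfolding \<Theta>_def using ext_anti[OF L0] by simp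
  have eq: "AE u in lborel. u \<in> {0..L} \<longrightarrow> \<Theta> u = f u"
    using AE_lborel_singleton[of L]
  proof eventually_elim
    case (elim u)
    then show ?case unfolding \<Theta>_def using ext_eq[OF L0, of u f] by auto
  qed
  have "(\<integral>\<^sup>+ u. indicator {0..L} u * ennreal ((\<Theta> u)^2) \<partial>lborel) = (\<integral>\<^sup>+ u. indicator {0..L} u * ennreal ((f u)^2) \<partial>lborel)"
    by (rule nn_integral_cong_AE) (use eq in \<open>eventually_elim, auto simp: indicator_def\<close>)
  also have "\<dots> < \<infinity>" using fi si_iff[of "{0..L}" "\<lambda>u. (f u)^2"] by simp
  finally have "set_integrable lborel {0..L} (\<lambda>u. (\<Theta> u)^2)"
    using si_iff[of "{0..L}" "\<lambda>u. (\<Theta> u)^2"] by simp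
  hence "admissible L \<Theta>" unfolding admissible_def using \<Theta>a by simp
  with eq show ?thesis by blast
qed

theorem gen_char: "fixed_space_char (H N a b) L (\<lambda>\<Theta> (\<rho>, \<sigma>). e * vsig (\<rho> / 2) * vsig (\<sigma> / 2) * \<Theta> (\<alpha> * \<rho> + \<beta> * \<sigma>))"
proof -
  have F: "(\<lambda>\<Theta> (\<rho>, \<sigma>). e * vsig (\<rho> / 2) * vsig (\<sigma> / 2) * \<Theta> (\<alpha> * \<rho> + \<beta> * \<sigma>)) = FF"
    by (simp add: FF_def fun_eq_iff)
  show ?thesis
    unfolding F fixed_space_char_def
  proof (intro conjI allI impI)
    show "\<exists>\<phi>. L2P \<phi> \<and> fixed_by (H N a b) \<phi> \<and> \<not> (AE p in lborel. p \<in> Pbox \<longrightarrow> \<phi> p = 0)"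
      by (rule nonzero)
  next
    fix \<phi> assume "L2P \<phi> \<and> fixed_by (H N a b) \<phi>"
    then show "\<exists>\<Theta>. admissible L \<Theta> \<and> (AE p in lborel. p \<in> Pbox \<longrightarrow> \<phi> p = FF \<Theta> p)"
      using char_dir by blast
  next
    fix \<Theta> assume A: "admissible L \<Theta>"
    show "L2P (FF \<Theta>)" by (rule FF_L2P[OF adm_anti[OF A] adm_meas[OF A] adm_int[OF A]])
    show "fixed_by (H N a b) (FF \<Theta>)" by (rule FF_fixed[OF adm_anti[OF A]])
  next
    show "\<exists>c>0. \<forall>\<Theta>. admissible L \<Theta> \<longrightarrow>
         set_lebesgue_integral lborel Pbox (\<lambda>p. (FF \<Theta> p)^2)
           = c * set_lebesgue_integral lborel {0 .. L} (\<lambda>u. (\<Theta> u)^2)"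
      using C_pos FF_int adm_anti adm_meas by blast
  next
    fix f :: "real \<Rightarrow> real"
    assume "f \<in> borel_measurable lborel \<and> set_integrable lborel {0 .. L} (\<lambda>u. (f u)^2)"
    then show "\<exists>\<Theta>. admissible L \<Theta> \<and> (AE u in lborel. u \<in> {0 .. L} \<longrightarrow> \<Theta> u = f u)"
      using surj by blast
  qed
qed

end


lemma inst:
  fixes N A B a b q0 :: int and e :: real
  assumes N1: "N \<ge> 1" and No: "odd N" and q0: "q0 > 0" and Ao: "odd A" and Bo: "odd B"
    and cop: "coprime A B" and a0: "a \<noteq> 0" and hab: "a * A + b * B = 0" and e1: "e * e = 1"
  shows "fixed_space_char (H N a b) (2 * pi / real_of_int (q0 * (N div gcd N B)))
           (\<lambda>\<Theta> (\<rho>, \<sigma>). e * vsig (\<rho> / 2) * vsig (\<sigma> / 2) * \<Theta> (of_int A / of_int q0 * \<rho> + of_int B / of_int q0 * \<sigma>))"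
proof -
  define G where "G = gcd N B"
  define M where "M = N div G"
  have Gpos: "G > 0" unfolding G_def using N1 by simp
  have NGM: "N = G * M" unfolding M_def G_def by simp
  have Mpos: "M > 0" using zero_less_mult_iff[of G M] NGM Gpos N1 by auto
  have GB: "B = G * (B div G)" unfolding G_def by simp
  have Mo: "odd M" using No NGM by auto
  have Bne: "B \<noteq> 0" using Bo by auto
  obtain x y where xy: "x * N + y * (2 * B) = gcd N (2 * B)" using bezout_int by blast
  have "gcd N (2 * B) = gcd N B" by (rule gcd_mult_right_left_cancel) (use No in simp)
  hence xy': "x * N + y * (2 * B) = G" using xy unfolding G_def by simp
  obtain u v where uv: "u * A + v * B = 1" using bezout_int[of A B] cop by auto
  have Go: "odd G" using No NGM by auto
  have xo: "odd x"
  proof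
    assume "even x"
    hence "even (x * N + y * (2 * B))" by simp
    with xy' Go show False by simp
  qed
  have uvo: "odd (u + v)"
  proof -
    have "odd (u * A + v * B)" using uv by simp
    then show ?thesis using Ao Bo by (simp add: even_add even_mult_iff)
  qed
  have IB: "G = (x * u) * A * N + (x * v) * B * N + 2 * y * B"
  proof -
    have "G = x * N * 1 + 2 * y * B" using xy' by (simp add: algebra_simps)
    also have "\<dots> = x * N * (u * A + v * B) + 2 * y * B" by (simp only: uv)
    also have "\<dots> = (x * u) * A * N + (x * v) * B * N + 2 * y * B" by (simp add: algebra_simps)
    finally show ?thesis .
  qed
  define L where "L = 2 * pi / real_of_int (q0 * M)"
  define ka where "ka = (A * M - 1) div 2"
  define kb where "kb = (B * M - 1) div 2"
  have ka: "2 * ka + 1 = A * M" unfolding ka_def using Ao Mo by simp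
  have kb: "2 * kb + 1 = B * M" unfolding kb_def using Bo Mo by simp
  have rq: "real_of_int q0 > 0" "real_of_int M > 0" "real_of_int G > 0" using q0 Mpos Gpos by simp_all
  interpret gen a b N ka kb "B div G" "x * u" "x * v" y e "of_int A / of_int q0" "of_int B / of_int q0" L
  proof
    show "N \<ge> 1" "a \<noteq> 0" "e * e = 1" by (fact N1 a0 e1)+
    show "real_of_int B / real_of_int q0 \<noteq> 0" using Bne q0 by simp
    show "L > 0" unfolding L_def using rq by simp
    show "real_of_int a * (real_of_int A / real_of_int q0) + real_of_int b * (real_of_int B / real_of_int q0) = 0"
    proof -
      have "real_of_int a * real_of_int A + real_of_int b * real_of_int B = 0"
        using arg_cong[OF hab, of real_of_int] by simp
      moreover have "real_of_int a * (real_of_int A / real_of_int q0) + real_of_int b * (real_of_int B / real_of_int q0)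
          = (real_of_int a * real_of_int A + real_of_int b * real_of_int B) / real_of_int q0"
        by (simp add: add_divide_distrib)
      ultimately show ?thesis by simp
    qed
    show "2 * pi * (real_of_int A / real_of_int q0) = real_of_int (2 * ka + 1) * L"
      unfolding ka L_def using rq by (simp add: field_simps)
    show "2 * pi * (real_of_int B / real_of_int q0) = real_of_int (2 * kb + 1) * L"
      unfolding kb L_def using rq by (simp add: field_simps)
    show "4 * pi * (real_of_int B / real_of_int q0) / real_of_int N = real_of_int (2 * (B div G)) * L"
    proof -
      have "real_of_int B = real_of_int G * real_of_int (B div G)" using arg_cong[OF GB, of real_of_int] by simp
      moreover have "real_of_int N = real_of_int G * real_of_int M" using arg_cong[OF NGM, of real_of_int] by simp
      ultimately show ?thesis unfolding L_def using rq by (simp add: field_simps)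
    qed
    show "L = real_of_int (x * u) * (2 * pi * (real_of_int A / real_of_int q0)) +
         real_of_int (x * v) * (2 * pi * (real_of_int B / real_of_int q0)) +
         real_of_int y * (4 * pi * (real_of_int B / real_of_int q0) / real_of_int N)"
    proof -
      have r1: "real_of_int G = real_of_int (x * u) * real_of_int A * real_of_int N + real_of_int (x * v) * real_of_int B * real_of_int N + 2 * real_of_int y * real_of_int B"
        using arg_cong[OF IB, of real_of_int] by simp
      have r2: "real_of_int N = real_of_int G * real_of_int M" using arg_cong[OF NGM, of real_of_int] by simp
      have "real_of_int (x * u) * (2 * pi * (real_of_int A / real_of_int q0)) +
         real_of_int (x * v) * (2 * pi * (real_of_int B / real_of_int q0)) +
         real_of_int y * (4 * pi * (real_of_int B / real_of_int q0) / real_of_int N)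
         = 2 * pi / (real_of_int q0 * real_of_int N) * (real_of_int (x * u) * real_of_int A * real_of_int N + real_of_int (x * v) * real_of_int B * real_of_int N + 2 * real_of_int y * real_of_int B)"
        using rq r2 by (simp add: field_simps)
      also have "\<dots> = 2 * pi / (real_of_int q0 * real_of_int N) * real_of_int G" by (simp only: r1)
      also have "\<dots> = L" unfolding L_def r2 using rq by (simp add: field_simps)
      finally show ?thesis by simp
    qed
    show "odd (x * u + x * v)" using xo uvo by (simp add: distrib_left[symmetric])
  qed
  show ?thesis using gen_char unfolding L_def M_def G_def .
qed


lemma vsig_neg_half: "vsig (- x / 2) = - vsig (x / 2)"
  using vsig_minus[of "x / 2"] by simp

theorem mainTheorem5:
  fixes N q0 p0 :: int
  assumes "N \<ge> 1" and "odd N"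
    and "q0 > 0" and "p0 > 0" and "odd q0" and "odd p0" and "coprime q0 p0"
    and "p0 > q0 \<or> (p0 = 1 \<and> q0 = 1)"
  shows "(let q = real_of_int p0 / real_of_int q0;
              N1 = N div gcd N q0;
              N2 = N div gcd N p0
          in fixed_space_char (H N q0 p0) (2 * pi / real_of_int (q0 * N1))
               (\<lambda>\<Theta> (\<rho>, \<sigma>). vsig (- \<rho> / 2) * vsig (\<sigma> / 2) * \<Theta> (\<sigma> - q * \<rho>))
           \<and> fixed_space_char (H N p0 q0) (2 * pi / real_of_int (q0 * N2))
               (\<lambda>\<Theta> (\<rho>, \<sigma>). vsig (- \<sigma> / 2) * vsig (\<rho> / 2) * \<Theta> (\<rho> - q * \<sigma>))
           \<and> fixed_space_char (H N (- q0) p0) (2 * pi / real_of_int (q0 * N1))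
               (\<lambda>\<Theta> (\<rho>, \<sigma>). vsig (\<sigma> / 2) * vsig (\<rho> / 2) * \<Theta> (\<sigma> + q * \<rho>))
           \<and> fixed_space_char (H N (- p0) q0) (2 * pi / real_of_int (q0 * N2))
               (\<lambda>\<Theta> (\<rho>, \<sigma>). vsig (\<sigma> / 2) * vsig (\<rho> / 2) * \<Theta> (- \<rho> - q * \<sigma>)))"
proof -
  note N1 = assms(1) and No = assms(2) and q0 = assms(3) and p0 = assms(4) and qo = assms(5) and po = assms(6)
    and cop = assms(7)
  define q where "q = real_of_int p0 / real_of_int q0"
  have q0r: "real_of_int q0 \<noteq> 0" using q0 by simp
  have c1: "coprime (- p0) q0" using cop by (simp add: coprime_commute)
  have c2: "coprime q0 (- p0)" using cop by simp
  have c3: "coprime p0 q0" using cop by (simp add: coprime_commute)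
  have c4: "coprime (- q0) (- p0)" using cop by simp
  have m1: "(-1::real) * -1 = 1" "(1::real) * 1 = 1" by simp_all
  have F1: "(\<lambda>\<Theta> (\<rho>, \<sigma>). - 1 * vsig (\<rho> / 2) * vsig (\<sigma> / 2) * \<Theta> (of_int (- p0) / of_int q0 * \<rho> + of_int q0 / of_int q0 * \<sigma>))
      = (\<lambda>\<Theta> (\<rho>, \<sigma>). vsig (- \<rho> / 2) * vsig (\<sigma> / 2) * \<Theta> (\<sigma> - q * \<rho>))"
  proof (intro ext, clarify)
    fix \<Theta> :: "real \<Rightarrow> real" and \<rho> \<sigma> :: real
    have "of_int (- p0) / of_int q0 * \<rho> + of_int q0 / of_int q0 * \<sigma> = \<sigma> - q * \<rho>"
      unfolding q_def using q0r by simp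
    then show "- 1 * vsig (\<rho> / 2) * vsig (\<sigma> / 2) * \<Theta> (of_int (- p0) / of_int q0 * \<rho> + of_int q0 / of_int q0 * \<sigma>)
        = vsig (- \<rho> / 2) * vsig (\<sigma> / 2) * \<Theta> (\<sigma> - q * \<rho>)" by (simp add: vsig_minus)
  qed
  have F2: "(\<lambda>\<Theta> (\<rho>, \<sigma>). - 1 * vsig (\<rho> / 2) * vsig (\<sigma> / 2) * \<Theta> (of_int q0 / of_int q0 * \<rho> + of_int (- p0) / of_int q0 * \<sigma>))
      = (\<lambda>\<Theta> (\<rho>, \<sigma>). vsig (- \<sigma> / 2) * vsig (\<rho> / 2) * \<Theta> (\<rho> - q * \<sigma>))"
  proof (intro ext, clarify)
    fix \<Theta> :: "real \<Rightarrow> real" and \<rho> \<sigma> :: real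
    have "of_int q0 / of_int q0 * \<rho> + of_int (- p0) / of_int q0 * \<sigma> = \<rho> - q * \<sigma>"
      unfolding q_def using q0r by simp
    then show "- 1 * vsig (\<rho> / 2) * vsig (\<sigma> / 2) * \<Theta> (of_int q0 / of_int q0 * \<rho> + of_int (- p0) / of_int q0 * \<sigma>)
        = vsig (- \<sigma> / 2) * vsig (\<rho> / 2) * \<Theta> (\<rho> - q * \<sigma>)" by (simp add: vsig_minus)
  qed
  have F3: "(\<lambda>\<Theta> (\<rho>, \<sigma>). 1 * vsig (\<rho> / 2) * vsig (\<sigma> / 2) * \<Theta> (of_int p0 / of_int q0 * \<rho> + of_int q0 / of_int q0 * \<sigma>))
      = (\<lambda>\<Theta> (\<rho>, \<sigma>). vsig (\<sigma> / 2) * vsig (\<rho> / 2) * \<Theta> (\<sigma> + q * \<rho>))"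
  proof (intro ext, clarify)
    fix \<Theta> :: "real \<Rightarrow> real" and \<rho> \<sigma> :: real
    have "of_int p0 / of_int q0 * \<rho> + of_int q0 / of_int q0 * \<sigma> = \<sigma> + q * \<rho>"
      unfolding q_def using q0r by simp
    then show "1 * vsig (\<rho> / 2) * vsig (\<sigma> / 2) * \<Theta> (of_int p0 / of_int q0 * \<rho> + of_int q0 / of_int q0 * \<sigma>)
        = vsig (\<sigma> / 2) * vsig (\<rho> / 2) * \<Theta> (\<sigma> + q * \<rho>)" by (simp add: mult_ac)
  qed
  have F4: "(\<lambda>\<Theta> (\<rho>, \<sigma>). 1 * vsig (\<rho> / 2) * vsig (\<sigma> / 2) * \<Theta> (of_int (- q0) / of_int q0 * \<rho> + of_int (- p0) / of_int q0 * \<sigma>))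
      = (\<lambda>\<Theta> (\<rho>, \<sigma>). vsig (\<sigma> / 2) * vsig (\<rho> / 2) * \<Theta> (- \<rho> - q * \<sigma>))"
  proof (intro ext, clarify)
    fix \<Theta> :: "real \<Rightarrow> real" and \<rho> \<sigma> :: real
    have "of_int (- q0) / of_int q0 * \<rho> + of_int (- p0) / of_int q0 * \<sigma> = - \<rho> - q * \<sigma>"
      unfolding q_def using q0r by (simp add: algebra_simps)
    then show "1 * vsig (\<rho> / 2) * vsig (\<sigma> / 2) * \<Theta> (of_int (- q0) / of_int q0 * \<rho> + of_int (- p0) / of_int q0 * \<sigma>)
        = vsig (\<sigma> / 2) * vsig (\<rho> / 2) * \<Theta> (- \<rho> - q * \<sigma>)" by (simp add: mult_ac)
  qed
  have I1: "fixed_space_char (H N q0 p0) (2 * pi / real_of_int (q0 * (N div gcd N q0)))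
      (\<lambda>\<Theta> (\<rho>, \<sigma>). - 1 * vsig (\<rho> / 2) * vsig (\<sigma> / 2) * \<Theta> (of_int (- p0) / of_int q0 * \<rho> + of_int q0 / of_int q0 * \<sigma>))"
    by (rule inst[OF N1 No q0]) (use po qo c1 q0 in \<open>auto simp: algebra_simps\<close>)
  have I2: "fixed_space_char (H N p0 q0) (2 * pi / real_of_int (q0 * (N div gcd N (- p0))))
      (\<lambda>\<Theta> (\<rho>, \<sigma>). - 1 * vsig (\<rho> / 2) * vsig (\<sigma> / 2) * \<Theta> (of_int q0 / of_int q0 * \<rho> + of_int (- p0) / of_int q0 * \<sigma>))"
    by (rule inst[OF N1 No q0]) (use po qo c2 p0 in \<open>auto simp: algebra_simps\<close>)
  have I3: "fixed_space_char (H N (- q0) p0) (2 * pi / real_of_int (q0 * (N div gcd N q0)))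
      (\<lambda>\<Theta> (\<rho>, \<sigma>). 1 * vsig (\<rho> / 2) * vsig (\<sigma> / 2) * \<Theta> (of_int p0 / of_int q0 * \<rho> + of_int q0 / of_int q0 * \<sigma>))"
    by (rule inst[OF N1 No q0]) (use po qo c3 q0 in \<open>auto simp: algebra_simps\<close>)
  have I4: "fixed_space_char (H N (- p0) q0) (2 * pi / real_of_int (q0 * (N div gcd N (- p0))))
      (\<lambda>\<Theta> (\<rho>, \<sigma>). 1 * vsig (\<rho> / 2) * vsig (\<sigma> / 2) * \<Theta> (of_int (- q0) / of_int q0 * \<rho> + of_int (- p0) / of_int q0 * \<sigma>))"
    by (rule inst[OF N1 No q0]) (use po qo c4 p0 in \<open>auto simp: algebra_simps\<close>)
  show ?thesis
    using I1 I2 I3 I4 unfolding gcd_neg2 F1 F2 F3 F4 Let_def q_def by blast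
qed


end
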